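(* Let $t_1,\dots,t_n$ be basic terms, $\kappa$ a time variable, and $\Delta$ the saturation of the sample set $\{t_1[\kappa],\dots,t_n[\kappa]\}$. Then $\mathbf{W}\not\models\mathrm{id}\le t_1\vee\cdots\vee t_n$ (i.e. there exist a valuation $\theta$ and $p\in\overline\omega$ with $[\![t_i]\!]_\theta(p)<p$ for all $i$) if, and only if, there exists a $\Delta$-diagram $\delta$ such that $\delta(\kappa)>\delta(t_i[\kappa])$ for all $i\in\{1,\dots,n\}$.
   Context: Time warps: $\overline{\omega}=\omega\cup\{\omega\}$ with its natural order; a time warp is a monotone $f\colon\overline\omega\to\overline\omega$ with $f(0)=0$, $f(\omega)=\bigvee_{n\in\omega}f(n)$; $W$ is the set of time warps ordered pointwise, $\vee$ pointwise join, $fg:=f\circ g$, $\mathrm{id}$ identity, $\bot$ constant $0$, $\top$ maps $p\neq0$ to $\omega$. Residuals $\backslash,/$ on $W$ satisfy $f\le h/g\iff fg\le h\iff g\le f\backslash h$; $f^{\ell}:=\mathrm{id}/f$, $f^{r}:=f\backslash\mathrm{id}$, $f^{o}:=\top\backslash f$. $\mathbf{W}$ denotes the time warp algebra $\langle W,\wedge,\vee,\circ,\backslash,/,\mathrm{id},\bot,\top\rangle$. Basic terms: $t,u::=x\mid tu\mid t^{o}\mid t^{\ell}\mid t^{r}\mid\mathrm{id}\mid\bot$ ($x$ a term variable). A valuation $\theta$ maps term variables to $W$; $[\![x]\!]_\theta=\theta(x)$, $[\![tu]\!]_\theta=[\![t]\!]_\theta[\![u]\!]_\theta$, $[\![t^{\star}]\!]_\theta=([\![t]\!]_\theta)^{\star}$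 for $\star\in\{o,\ell,r\}$, $[\![\mathrm{id}]\!]_\theta=\mathrm{id}$, $[\![\bot]\!]_\theta=\bot$. Samples: $\alpha::=\kappa\mid t[\alpha]\mid\mathsf{s}(\alpha)\mid\mathsf{p}(\alpha)\mid\mathsf{last}(t)$ ($\kappa$ a time variable, $t$ a basic term). Relation $\leadsto$: $t[\alpha]\leadsto\alpha$; $\mathsf{s}(\alpha)\leadsto\alpha$; $\mathsf{p}(\alpha)\leadsto\alpha$; $(tu)[\alpha]\leadsto t[u[\alpha]]$; $t^{o}[\alpha]\leadsto t[\alpha]$; $t^{r}[\alpha]\leadsto t[t^{r}[\alpha]], t[\mathsf{s}(t^{r}[\alpha])]$; $t^{\ell}[\alpha]\leadsto t[t^{\ell}[\alpha]], t[\mathsf{p}(t^{\ell}[\alpha])]$; $t[\alpha]\leadsto t[\mathsf{last}(t)]$. The saturation of a sample set is its closure under $\leadsto^{*}$ (reflexive transitive closure). For $p\in\overline\omega$: $p\ominus1=p-1$ if $p\in\omega\setminus\{0\}$, else $p$; $p\oplus1=p+1$ if $p\in\omega$, else $p$. For a saturated sample set $\Delta$, a $\Delta$-diagram is a map $\delta\colon\Delta\to\overline\omega$ such that (all samples mentioned belonging to $\Delta$): (S1) $\delta(\alpha)\le\delta(\beta)\Rightarrow\delta(t[\alpha])\le\delta(t[\beta])$; (S2) $\delta(\alpha)=0\Rightarrow\delta(t[\alpha])=0$; (S3) $\delta(\mathsf{p}(\alpha))=\delta(\alpha)\ominus1$; (S4) $\delta(\mathsf{s}(\alpha))=\delta(\alpha)\oplus1$;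 (S5) for $t[\alpha]\in\Delta$: $\delta(\mathsf{last}(t))\le\delta(\alpha)\iff\delta(t[\alpha])=\delta(t[\mathsf{last}(t)])$; (S6) $\delta(\mathsf{last}(t))=\omega\Rightarrow\delta(t[\mathsf{last}(t)])=\omega$; (L1) $\delta(\mathrm{id}[\alpha])=\delta(\alpha)$; (L2) if $\bot[\alpha]\in\Delta$ then $\delta(\mathsf{last}(\bot))=0$; (L3) $\delta((tu)[\alpha])=\delta(t[u[\alpha]])$; (L4) if $(tu)[\mathsf{last}(tu)]\in\Delta$ and $\delta(\mathsf{last}(tu))=\omega$ then $\delta(\mathsf{last}(t))=\delta(\mathsf{last}(u))=\omega$; (O1) $\delta(t^{o}[\alpha])\in\{0,\omega\}$; (O2) $\delta(\alpha)<\omega\Rightarrow(\delta(t^{o}[\alpha])=\omega\iff\delta(t[\alpha])=\omega)$; (O3) $\delta(\mathsf{last}(t^{o}))<\omega$; (O4) for $t[\alpha],t^{o}[\mathsf{last}(t^{o})]\in\Delta$: if $\delta(t^{o}[\mathsf{last}(t^{o})])<\omega$ and $\delta(\alpha)<\omega$ then $\delta(t[\alpha])<\omega$; (R1) $\delta(t[t^{r}[\alpha]])\le\delta(\alpha)$; (R2) for $t^{r}[\alpha]\in\Delta$: if $0<\delta(\alpha)<\omega$ and $\delta(t^{r}[\alpha])<\omega$ then $\delta(\alpha)<\delta(t[\mathsf{s}(t^{r}[\alpha])])$; (R3) for $t^{r}[\mathsf{last}(t^{r})]\in\Delta$: $\delta(\mathsf{last}(t^{r}))=\omega\Rightarrow\delta(\mathsf{last}(t))=\omega$;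 (R4) for $t^{r}[\mathsf{last}(t^{r})]\in\Delta$: $\delta(t^{r}[\mathsf{last}(t^{r})])<\omega\Rightarrow\delta(t[\mathsf{s}(t^{r}[\mathsf{last}(t^{r})])])=\omega$; (Λ1) for $t[t^{\ell}[\alpha]]\in\Delta$: $\delta(t^{\ell}[\alpha])<\omega\Rightarrow\delta(\alpha)\le\delta(t[t^{\ell}[\alpha]])$; (Λ2) for $t^{\ell}[\alpha]\in\Delta$: if $0<\delta(\alpha)<\omega$ and $\delta(t^{\ell}[\alpha])<\omega$ then $\delta(t[\mathsf{p}(t^{\ell}[\alpha])])<\delta(\alpha)$; (Λ3) for $t[t^{\ell}[\alpha]]\in\Delta$: if $\delta(\alpha)<\omega$ and $\delta(t^{\ell}[\alpha])=\omega$ then $\delta(t[t^{\ell}[\alpha]])<\delta(\alpha)$; (Λ4) for $t^{\ell}[\mathsf{last}(t^{\ell})]\in\Delta$: $\delta(\mathsf{last}(t^{\ell}))=\omega\Rightarrow\delta(\mathsf{last}(t))=\omega$; (Λ5) for $t^{\ell}[\mathsf{last}(t^{\ell})]\in\Delta$: $\delta(t^{\ell}[\mathsf{last}(t^{\ell})])<\omega\Rightarrow\delta(t[t^{\ell}[\mathsf{last}(t^{\ell})]])=\omega$. *)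

theory Defs
  imports Main "HOL-Library.Extended_Nat"
begin

text \<open>The ordinal omega-bar = omega + 1 is rendered as enat, with omega = \<infinity>.
  Functions enat => enat carry the pointwise order and pointwise Sup/sup.\<close>

definition timewarp :: "(enat \<Rightarrow> enat) \<Rightarrow> bool" where
  "timewarp f \<longleftrightarrow> mono f \<and> f 0 = 0 \<and> f \<infinity> = (SUP n. f (enat n))"

definition W :: "(enat \<Rightarrow> enat) set" where
  "W = {f. timewarp f}"

definition topW :: "enat \<Rightarrow> enat" where
  "topW p = (if p = 0 then 0 else \<infinity>)"

definition botW :: "enat \<Rightarrow> enat" where
  "botW p = 0"

text \<open>Residuals on W: f \<le> h / g iff f g \<le> h iff g \<le> f \ h (for f, g in W).
  They are given as the greatest elements of W with the respective property.\<close>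

definition ldiv :: "(enat \<Rightarrow> enat) \<Rightarrow> (enat \<Rightarrow> enat) \<Rightarrow> (enat \<Rightarrow> enat)" where
  "ldiv f h = Sup {g \<in> W. f \<circ> g \<le> h}"

definition rdiv :: "(enat \<Rightarrow> enat) \<Rightarrow> (enat \<Rightarrow> enat) \<Rightarrow> (enat \<Rightarrow> enat)" where
  "rdiv h g = Sup {f \<in> W. f \<circ> g \<le> h}"

definition lconj :: "(enat \<Rightarrow> enat) \<Rightarrow> (enat \<Rightarrow> enat)" where
  "lconj f = rdiv id f"

definition rconj :: "(enat \<Rightarrow> enat) \<Rightarrow> (enat \<Rightarrow> enat)" where
  "rconj f = ldiv f id"

definition oconj :: "(enat \<Rightarrow> enat) \<Rightarrow> (enat \<Rightarrow> enat)" where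
  "oconj f = ldiv topW f"

datatype 'v bterm =
    TVar 'v
  | TComp "'v bterm" "'v bterm"
  | TO "'v bterm"
  | TL "'v bterm"
  | TR "'v bterm"
  | TId
  | TBot

definition valuation :: "('v \<Rightarrow> (enat \<Rightarrow> enat)) \<Rightarrow> bool" where
  "valuation \<theta> \<longleftrightarrow> (\<forall>x. \<theta> x \<in> W)"

fun eval :: "('v \<Rightarrow> (enat \<Rightarrow> enat)) \<Rightarrow> 'v bterm \<Rightarrow> (enat \<Rightarrow> enat)" where
  "eval \<theta> (TVar x) = \<theta> x"
| "eval \<theta> (TComp t u) = eval \<theta> t \<circ> eval \<theta> u"
| "eval \<theta> (TO t) = oconj (eval \<theta> t)"
| "eval \<theta> (TL t) = lconj (eval \<theta> t)"
| "eval \<theta> (TR t) = rconj (eval \<theta> t)"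
| "eval \<theta> TId = id"
| "eval \<theta> TBot = botW"

datatype ('v, 'k) sample =
    SVar 'k
  | SApp "'v bterm" "('v, 'k) sample"
  | SS "('v, 'k) sample"
  | SP "('v, 'k) sample"
  | SLast "'v bterm"

inductive leads :: "('v, 'k) sample \<Rightarrow> ('v, 'k) sample \<Rightarrow> bool" where
  app_arg: "leads (SApp t a) a"
| s_arg: "leads (SS a) a"
| p_arg: "leads (SP a) a"
| comp: "leads (SApp (TComp t u) a) (SApp t (SApp u a))"
| o_un: "leads (SApp (TO t) a) (SApp t a)"
| r1: "leads (SApp (TR t) a) (SApp t (SApp (TR t) a))"
| r2: "leads (SApp (TR t) a) (SApp t (SS (SApp (TR t) a)))"
| l1: "leads (SApp (TL t) a) (SApp t (SApp (TL t) a))"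
| l2: "leads (SApp (TL t) a) (SApp t (SP (SApp (TL t) a)))"
| last: "leads (SApp t a) (SApp t (SLast t))"

definition saturation :: "('v, 'k) sample set \<Rightarrow> ('v, 'k) sample set" where
  "saturation A = {b. \<exists>a\<in>A. leads\<^sup>*\<^sup>* a b}"

definition ominus1 :: "enat \<Rightarrow> enat" where
  "ominus1 p = (if p \<noteq> 0 \<and> p \<noteq> \<infinity> then p - 1 else p)"

definition oplus1 :: "enat \<Rightarrow> enat" where
  "oplus1 p = (if p \<noteq> \<infinity> then p + 1 else p)"

text \<open>A Delta-diagram, with delta given as a total function whose values are only
  constrained on Delta; every condition is guarded by membership in Delta of all
  samples it mentions.\<close>

definition diagram :: "('v, 'k) sample set \<Rightarrow> (('v, 'k) sample \<Rightarrow> enat) \<Rightarrow> bool" where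
  "diagram D \<delta> \<longleftrightarrow>
   \<comment> \<open>S1\<close>
   (\<forall>t a b. a \<in> D \<and> b \<in> D \<and> SApp t a \<in> D \<and> SApp t b \<in> D \<longrightarrow>
      \<delta> a \<le> \<delta> b \<longrightarrow> \<delta> (SApp t a) \<le> \<delta> (SApp t b)) \<and>
   \<comment> \<open>S2\<close>
   (\<forall>t a. a \<in> D \<and> SApp t a \<in> D \<longrightarrow> \<delta> a = 0 \<longrightarrow> \<delta> (SApp t a) = 0) \<and>
   \<comment> \<open>S3\<close>
   (\<forall>a. a \<in> D \<and> SP a \<in> D \<longrightarrow> \<delta> (SP a) = ominus1 (\<delta> a)) \<and>
   \<comment> \<open>S4\<close>
   (\<forall>a. a \<in> D \<and> SS a \<in> D \<longrightarrow> \<delta> (SS a) = oplus1 (\<delta> a)) \<and>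
   \<comment> \<open>S5\<close>
   (\<forall>t a. a \<in> D \<and> SApp t a \<in> D \<and> SLast t \<in> D \<and> SApp t (SLast t) \<in> D \<longrightarrow>
      (\<delta> (SLast t) \<le> \<delta> a \<longleftrightarrow> \<delta> (SApp t a) = \<delta> (SApp t (SLast t)))) \<and>
   \<comment> \<open>S6\<close>
   (\<forall>t. SLast t \<in> D \<and> SApp t (SLast t) \<in> D \<longrightarrow>
      \<delta> (SLast t) = \<infinity> \<longrightarrow> \<delta> (SApp t (SLast t)) = \<infinity>) \<and>
   \<comment> \<open>L1\<close>
   (\<forall>a. a \<in> D \<and> SApp TId a \<in> D \<longrightarrow> \<delta> (SApp TId a) = \<delta> a) \<and>
   \<comment> \<open>L2\<close>
   (\<forall>a. SApp TBot a \<in> D \<and> SLast TBot \<in> D \<longrightarrow> \<delta> (SLast TBot) = 0) \<and>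
   \<comment> \<open>L3\<close>
   (\<forall>t u a. SApp (TComp t u) a \<in> D \<and> SApp t (SApp u a) \<in> D \<longrightarrow>
      \<delta> (SApp (TComp t u) a) = \<delta> (SApp t (SApp u a))) \<and>
   \<comment> \<open>L4\<close>
   (\<forall>t u. SApp (TComp t u) (SLast (TComp t u)) \<in> D \<and> SLast (TComp t u) \<in> D \<and>
          SLast t \<in> D \<and> SLast u \<in> D \<longrightarrow>
      \<delta> (SLast (TComp t u)) = \<infinity> \<longrightarrow> \<delta> (SLast t) = \<infinity> \<and> \<delta> (SLast u) = \<infinity>) \<and>
   \<comment> \<open>O1\<close>
   (\<forall>t a. SApp (TO t) a \<in> D \<longrightarrow> \<delta> (SApp (TO t) a) \<in> {0, \<infinity>}) \<and>
   \<comment> \<open>O2\<close>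
   (\<forall>t a. a \<in> D \<and> SApp (TO t) a \<in> D \<and> SApp t a \<in> D \<longrightarrow> \<delta> a < \<infinity> \<longrightarrow>
      (\<delta> (SApp (TO t) a) = \<infinity> \<longleftrightarrow> \<delta> (SApp t a) = \<infinity>)) \<and>
   \<comment> \<open>O3\<close>
   (\<forall>t. SLast (TO t) \<in> D \<longrightarrow> \<delta> (SLast (TO t)) < \<infinity>) \<and>
   \<comment> \<open>O4\<close>
   (\<forall>t a. a \<in> D \<and> SApp t a \<in> D \<and> SApp (TO t) (SLast (TO t)) \<in> D \<longrightarrow>
      \<delta> (SApp (TO t) (SLast (TO t))) < \<infinity> \<longrightarrow> \<delta> a < \<infinity> \<longrightarrow> \<delta> (SApp t a) < \<infinity>) \<and>
   \<comment> \<open>R1\<close>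
   (\<forall>t a. a \<in> D \<and> SApp t (SApp (TR t) a) \<in> D \<longrightarrow>
      \<delta> (SApp t (SApp (TR t) a)) \<le> \<delta> a) \<and>
   \<comment> \<open>R2\<close>
   (\<forall>t a. a \<in> D \<and> SApp (TR t) a \<in> D \<and> SApp t (SS (SApp (TR t) a)) \<in> D \<longrightarrow>
      0 < \<delta> a \<longrightarrow> \<delta> a < \<infinity> \<longrightarrow> \<delta> (SApp (TR t) a) < \<infinity> \<longrightarrow>
      \<delta> a < \<delta> (SApp t (SS (SApp (TR t) a)))) \<and>
   \<comment> \<open>R3\<close>
   (\<forall>t. SApp (TR t) (SLast (TR t)) \<in> D \<and> SLast (TR t) \<in> D \<and> SLast t \<in> D \<longrightarrow>
      \<delta> (SLast (TR t)) = \<infinity> \<longrightarrow> \<delta> (SLast t) = \<infinity>) \<and>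
   \<comment> \<open>R4\<close>
   (\<forall>t. SApp (TR t) (SLast (TR t)) \<in> D \<and> SApp t (SS (SApp (TR t) (SLast (TR t)))) \<in> D \<longrightarrow>
      \<delta> (SApp (TR t) (SLast (TR t))) < \<infinity> \<longrightarrow>
      \<delta> (SApp t (SS (SApp (TR t) (SLast (TR t))))) = \<infinity>) \<and>
   \<comment> \<open>\<Lambda>1\<close>
   (\<forall>t a. a \<in> D \<and> SApp t (SApp (TL t) a) \<in> D \<longrightarrow>
      \<delta> (SApp (TL t) a) < \<infinity> \<longrightarrow> \<delta> a \<le> \<delta> (SApp t (SApp (TL t) a))) \<and>
   \<comment> \<open>\<Lambda>2\<close>
   (\<forall>t a. a \<in> D \<and> SApp (TL t) a \<in> D \<and> SApp t (SP (SApp (TL t) a)) \<in> D \<longrightarrow>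
      0 < \<delta> a \<longrightarrow> \<delta> a < \<infinity> \<longrightarrow> \<delta> (SApp (TL t) a) < \<infinity> \<longrightarrow>
      \<delta> (SApp t (SP (SApp (TL t) a))) < \<delta> a) \<and>
   \<comment> \<open>\<Lambda>3\<close>
   (\<forall>t a. a \<in> D \<and> SApp (TL t) a \<in> D \<and> SApp t (SApp (TL t) a) \<in> D \<longrightarrow>
      \<delta> a < \<infinity> \<longrightarrow> \<delta> (SApp (TL t) a) = \<infinity> \<longrightarrow> \<delta> (SApp t (SApp (TL t) a)) < \<delta> a) \<and>
   \<comment> \<open>\<Lambda>4\<close>
   (\<forall>t. SApp (TL t) (SLast (TL t)) \<in> D \<and> SLast (TL t) \<in> D \<and> SLast t \<in> D \<longrightarrow>
      \<delta> (SLast (TL t)) = \<infinity> \<longrightarrow> \<delta> (SLast t) = \<infinity>) \<and>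
   \<comment> \<open>\<Lambda>5\<close>
   (\<forall>t. SApp (TL t) (SLast (TL t)) \<in> D \<and> SApp t (SApp (TL t) (SLast (TL t))) \<in> D \<longrightarrow>
      \<delta> (SApp (TL t) (SLast (TL t))) < \<infinity> \<longrightarrow>
      \<delta> (SApp t (SApp (TL t) (SLast (TL t)))) = \<infinity>)"

end

theory Submission
  imports Defs
begin


lemma tw_mono: "f \<in> W \<Longrightarrow> a \<le> b \<Longrightarrow> f a \<le> f b"
  unfolding W_def timewarp_def by (auto dest: monoD)
lemma tw_0[simp]: "f \<in> W \<Longrightarrow> f 0 = 0"
  unfolding W_def timewarp_def by auto
lemma tw_inf: "f \<in> W \<Longrightarrow> f \<infinity> = (SUP n. f (enat n))"
  unfolding W_def timewarp_def by auto

lemma Sup_enat_attained: "(A::enat set) \<noteq> {} \<Longrightarrow> Sup A \<noteq> \<infinity> \<Longrightarrow> Sup A \<in> A"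
  unfolding Sup_enat_def by (auto split: if_splits intro: Max_in)

lemma tw_attained: "f \<in> W \<Longrightarrow> f \<infinity> \<noteq> \<infinity> \<Longrightarrow> \<exists>n. f (enat n) = f \<infinity>"
proof -
  assume f: "f \<in> W" and fi: "f \<infinity> \<noteq> \<infinity>"
  have "Sup (range (\<lambda>n. f (enat n))) \<in> range (\<lambda>n. f (enat n))"
    using fi tw_inf[OF f] by (intro Sup_enat_attained) auto
  then show ?thesis using tw_inf[OF f] by auto
qed

lemma tw_unb: "f \<in> W \<Longrightarrow> f \<infinity> = \<infinity> \<Longrightarrow> a < \<infinity> \<Longrightarrow> \<exists>n. a < f (enat n)"
  using tw_inf[of f] by (metis less_SUP_iff)

lemma tw_sup_le: "f \<in> W \<Longrightarrow> f (Sup S) \<le> (SUP s\<in>S. f s)"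
proof (cases "S = {}")
  case True
  assume "f \<in> W" then show ?thesis using True by (simp add: bot_enat_def)
next
  case False
  assume f: "f \<in> W"
  show ?thesis
  proof (cases "Sup S \<in> S")
    case True then show ?thesis by (rule SUP_upper)
  next
    case nS: False
    then have inf: "Sup S = \<infinity>" using Sup_enat_attained[OF False] by (cases "Sup S") auto
    have "f (enat n) \<le> (SUP s\<in>S. f s)" for n
    proof -
      have "enat n < Sup S" using inf by simp
      then obtain s where "s \<in> S" "enat n < s" using less_Sup_iff by blast
      then have "f (enat n) \<le> f s" using tw_mono[OF f] by simp
      also have "\<dots> \<le> (SUP s\<in>S. f s)" using \<open>s \<in> S\<close> by (rule SUP_upper)
      finally show ?thesis .
    qed
    then show ?thesis using inf tw_inf[OF f] by (simp add: SUP_le_iff)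
  qed
qed

lemma W_I: "mono f \<Longrightarrow> f 0 = 0 \<Longrightarrow> f \<infinity> = (SUP n. f (enat n)) \<Longrightarrow> f \<in> W"
  unfolding W_def timewarp_def by auto

lemma W_Sup: "F \<subseteq> W \<Longrightarrow> Sup F \<in> W"
proof (rule W_I)
  assume F: "F \<subseteq> W"
  show "mono (Sup F)"
  proof (rule monoI)
    fix x y :: enat assume "x \<le> y"
    then show "Sup F x \<le> Sup F y" using F unfolding Sup_apply
      by (intro SUP_mono) (auto intro: tw_mono)
  qed
  show "Sup F 0 = 0" unfolding Sup_apply using F
    by (cases "F = {}") (auto simp: bot_enat_def intro!: SUP_eq_const)
  have "Sup F \<infinity> = (SUP f\<in>F. SUP n. f (enat n))" using F by (auto simp: Sup_apply tw_inf intro!: SUP_cong)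
  also have "\<dots> = (SUP n. SUP f\<in>F. f (enat n))" by (rule SUP_commute)
  finally show "Sup F \<infinity> = (SUP n. Sup F (enat n))" by (simp add: Sup_apply)
qed

lemma W_comp: "f \<in> W \<Longrightarrow> g \<in> W \<Longrightarrow> f \<circ> g \<in> W"
proof (rule W_I)
  assume f: "f \<in> W" and g: "g \<in> W"
  show "mono (f \<circ> g)"
  proof (rule monoI)
    fix x y :: enat assume "x \<le> y"
    then show "(f \<circ> g) x \<le> (f \<circ> g) y" using tw_mono[OF f] tw_mono[OF g] by simp
  qed
  show "(f \<circ> g) 0 = 0" using f g by simp
  show "(f \<circ> g) \<infinity> = (SUP n. (f \<circ> g) (enat n))"
  proof (rule antisym)
    show "(SUP n. (f \<circ> g) (enat n)) \<le> (f \<circ> g) \<infinity>"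
      by (rule SUP_least) (simp add: tw_mono[OF f] tw_mono[OF g])
    show "(f \<circ> g) \<infinity> \<le> (SUP n. (f \<circ> g) (enat n))"
    proof (cases "g \<infinity> = \<infinity>")
      case True
      have "f (enat m) \<le> (SUP n. (f \<circ> g) (enat n))" for m
      proof -
        obtain n where "enat m < g (enat n)" using tw_unb[OF g True, of "enat m"] by auto
        then have "f (enat m) \<le> (f \<circ> g) (enat n)" using tw_mono[OF f] by simp
        also have "\<dots> \<le> (SUP n. (f \<circ> g) (enat n))" by (rule SUP_upper) simp
        finally show ?thesis .
      qed
      then show ?thesis using True tw_inf[OF f] by (simp add: SUP_le_iff)
    next
      case False
      then obtain n where "g (enat n) = g \<infinity>" using tw_attained[OF g] by blast
      then have "(f \<circ> g) \<infinity> = (f \<circ> g) (enat n)" by simp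
      also have "\<dots> \<le> (SUP n. (f \<circ> g) (enat n))" by (rule SUP_upper) simp
      finally show ?thesis .
    qed
  qed
qed

lemma W_id: "id \<in> W"
proof (rule W_I)
  have "finite (range enat) \<Longrightarrow> False"
    using finite_imageD[of enat UNIV] infinite_UNIV_nat by (auto simp: inj_on_def)
  then show "id \<infinity> = (SUP n. id (enat n))" by (auto simp: Sup_enat_def)
qed (auto simp: mono_def)

lemma W_bot: "botW \<in> W"
  by (rule W_I) (auto simp: botW_def mono_def)

lemma W_top: "topW \<in> W"
proof (rule W_I)
  show "mono topW" by (auto simp: mono_def topW_def)
  show "topW 0 = 0" by (simp add: topW_def)
  have "topW (enat 1) \<le> (SUP n. topW (enat n))" by (rule SUP_upper) simp
  moreover have "topW (enat 1) = \<infinity>" by (simp add: topW_def zero_enat_def)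
  ultimately have "(SUP n. topW (enat n)) = \<infinity>" by (simp add: top_unique[unfolded top_enat_def])
  then show "topW \<infinity> = (SUP n. topW (enat n))" by (simp add: topW_def)
qed

lemma ldiv_W: "ldiv f h \<in> W"
  unfolding ldiv_def by (rule W_Sup) auto
lemma rdiv_W: "rdiv h g \<in> W"
  unfolding rdiv_def by (rule W_Sup) auto

lemma ldiv_upper: "g \<in> W \<Longrightarrow> f \<circ> g \<le> h \<Longrightarrow> g \<le> ldiv f h"
  unfolding ldiv_def by (rule Sup_upper) auto
lemma rdiv_upper: "f \<in> W \<Longrightarrow> f \<circ> g \<le> h \<Longrightarrow> f \<le> rdiv h g"
  unfolding rdiv_def by (rule Sup_upper) auto

lemma ldiv_prop: assumes f: "f \<in> W" shows "f (ldiv f h p) \<le> h p"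
proof -
  let ?G = "{g \<in> W. f \<circ> g \<le> h}"
  have "ldiv f h p = (SUP g\<in>?G. g p)" unfolding ldiv_def Sup_apply by simp
  then have "f (ldiv f h p) = f (Sup ((\<lambda>g. g p) ` ?G))" by simp
  also have "\<dots> \<le> (SUP s\<in>(\<lambda>g. g p) ` ?G. f s)" by (rule tw_sup_le[OF f])
  also have "\<dots> \<le> h p" by (auto intro!: SUP_least simp: le_fun_def)
  finally show ?thesis .
qed

lemma rdiv_prop: "rdiv h g (g p) \<le> h p"
  unfolding rdiv_def Sup_apply by (auto intro!: SUP_least simp: le_fun_def)

definition step :: "enat \<Rightarrow> enat \<Rightarrow> enat \<Rightarrow> enat" where
  "step a m p = (if p < a then 0 else m)"

lemma step_W: assumes "a \<noteq> 0" "a \<noteq> \<infinity>" shows "step a m \<in> W"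
proof (rule W_I)
  show "mono (step a m)" by (auto simp: mono_def step_def)
  show "step a m 0 = 0" using assms by (simp add: step_def)
  obtain k where k: "a = enat k" using assms by (cases a) auto
  have "(SUP n. step a m (enat n)) = m"
  proof (rule antisym)
    show "(SUP n. step a m (enat n)) \<le> m" by (rule SUP_least) (simp add: step_def)
    have "step a m (enat k) \<le> (SUP n. step a m (enat n))" by (rule SUP_upper) simp
    then show "m \<le> (SUP n. step a m (enat n))" by (simp add: step_def k)
  qed
  then show "step a m \<infinity> = (SUP n. step a m (enat n))" by (simp add: step_def)
qed



lemma enat_lt_plus1: "x < q + 1 \<Longrightarrow> q \<noteq> \<infinity> \<Longrightarrow> x \<le> (q::enat)"
  by (cases x; cases q) (auto simp: one_enat_def)
lemma enat_plus1_le: "q < p \<Longrightarrow> q + 1 \<le> (p::enat)"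
  by (cases q; cases p) (auto simp: one_enat_def)

lemma A_inf: "f \<in> W \<Longrightarrow> (\<forall>n. f (enat n) < f \<infinity>) \<Longrightarrow> f \<infinity> = \<infinity>"
  by (metis tw_attained order_less_irrefl)

lemma all_le_inf: "(\<And>n. enat n \<le> x) \<Longrightarrow> x = \<infinity>"
proof (cases x)
  case (enat m)
  assume "\<And>n. enat n \<le> x"
  then have "enat (Suc m) \<le> enat m" using enat by simp
  then show ?thesis by simp
qed simp

section \<open>rconj\<close>

lemma rc_W: "rconj f \<in> W" unfolding rconj_def by (rule ldiv_W)
lemma rc_prop: "f \<in> W \<Longrightarrow> f (rconj f a) \<le> a"
  unfolding rconj_def using ldiv_prop[of f id a] by simp
lemma rc_mono: "a \<le> b \<Longrightarrow> rconj f a \<le> rconj f b" using tw_mono[OF rc_W] .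

lemma rc_lower: assumes f: "f \<in> W" and a: "a \<noteq> 0" "a \<noteq> \<infinity>" and q: "f q \<le> a"
  shows "q \<le> rconj f a"
proof -
  have "f \<circ> step a q \<le> id"
  proof (rule le_funI)
    fix p show "(f \<circ> step a q) p \<le> id p"
      using f q by (cases "p < a") (auto simp: step_def)
  qed
  then have "step a q \<le> rconj f" unfolding rconj_def by (intro ldiv_upper step_W a)
  then have "step a q a \<le> rconj f a" by (simp add: le_fun_def)
  then show ?thesis by (simp add: step_def)
qed

lemma rc_b: assumes f: "f \<in> W" and a: "a \<noteq> 0" "a \<noteq> \<infinity>" and q: "q \<noteq> \<infinity>" "f q \<le> a" "a < f (q + 1)"
  shows "rconj f a = q"
proof (rule antisym)
  show "q \<le> rconj f a" by (rule rc_lower[OF f a q(2)])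
  have "f (rconj f a) < f (q + 1)" using rc_prop[OF f, of a] q(3) by simp
  then have "rconj f a < q + 1" using tw_mono[OF f] by (meson not_le)
  then show "rconj f a \<le> q" using q(1) by (rule enat_lt_plus1)
qed

lemma rc_c: assumes f: "f \<in> W" and a: "a \<noteq> 0" "a \<noteq> \<infinity>" and q: "f \<infinity> \<le> a"
  shows "rconj f a = \<infinity>"
  using rc_lower[OF f a q] by (simp add: top_unique[unfolded top_enat_def])

lemma rc_inf_le: assumes f: "f \<in> W" and V: "V \<noteq> \<infinity>" "f (V + 1) = \<infinity>"
  shows "rconj f \<infinity> \<le> V"
proof -
  have "rconj f (enat n) \<le> V" for n
  proof -
    have "f (rconj f (enat n)) \<le> enat n" by (rule rc_prop[OF f])
    also have "\<dots> < f (V + 1)" using V(2) by simp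
    finally have "f (rconj f (enat n)) < f (V + 1)" .
    then have "rconj f (enat n) < V + 1" using tw_mono[OF f] by (meson not_le)
    then show ?thesis using V(1) by (rule enat_lt_plus1)
  qed
  then show ?thesis using tw_inf[OF rc_W, of f] by (simp add: SUP_le_iff)
qed

lemma rc_inf_ge: assumes f: "f \<in> W" and V: "f V \<noteq> \<infinity>"
  shows "V \<le> rconj f \<infinity>"
proof -
  let ?a = "max (f V) 1"
  have "V \<le> rconj f ?a" using V by (intro rc_lower[OF f]) (auto simp: max_def one_enat_def zero_enat_def)
  also have "\<dots> \<le> rconj f \<infinity>" by (rule rc_mono) simp
  finally show ?thesis .
qed

lemma rc_A: assumes f: "f \<in> W" and A: "\<forall>n. f (enat n) < f \<infinity>"
  shows "rconj f \<infinity> = \<infinity>" "\<forall>n. rconj f (enat n) < rconj f \<infinity>"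
proof -
  have fi: "f \<infinity> = \<infinity>" using A_inf[OF f A] .
  have "enat n \<le> rconj f \<infinity>" for n using rc_inf_ge[OF f, of "enat n"] A fi by auto
  then show ri: "rconj f \<infinity> = \<infinity>" by (rule all_le_inf)
  show "\<forall>n. rconj f (enat n) < rconj f \<infinity>"
  proof
    fix n
    have "rconj f (enat n) \<noteq> \<infinity>"
    proof
      assume "rconj f (enat n) = \<infinity>"
      then show False using rc_prop[OF f, of "enat n"] fi by simp
    qed
    then show "rconj f (enat n) < rconj f \<infinity>" using ri by simp
  qed
qed

section \<open>lconj\<close>

lemma lc_W: "lconj f \<in> W" unfolding lconj_def by (rule rdiv_W)
lemma lc_prop: "lconj f (f q) \<le> q"
  unfolding lconj_def using rdiv_prop[of id f q] by simp
lemma lc_mono: "a \<le> b \<Longrightarrow> lconj f a \<le> lconj f b" using tw_mono[OF lc_W] .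

lemma lc_lower: assumes f: "f \<in> W" and a: "a \<noteq> 0" "a \<noteq> \<infinity>" and q: "f q < a"
  shows "q + 1 \<le> lconj f a"
proof -
  have "step a (q + 1) \<circ> f \<le> id"
  proof (rule le_funI)
    fix p show "(step a (q + 1) \<circ> f) p \<le> id p"
    proof (cases "f p < a")
      case False
      then have "q < p" using q tw_mono[OF f, of p q] by (meson le_less_trans not_le)
      then show ?thesis using False by (simp add: step_def enat_plus1_le)
    qed (simp add: step_def)
  qed
  then have "step a (q + 1) \<le> lconj f" unfolding lconj_def by (intro rdiv_upper step_W a)
  then have "step a (q + 1) a \<le> lconj f a" by (simp add: le_fun_def)
  then show ?thesis by (simp add: step_def)
qed

lemma lc_b: assumes f: "f \<in> W" and a: "a \<noteq> 0" "a \<noteq> \<infinity>" and q: "a \<le> f (enat k)" "f (enat (k - 1)) < a" "k > 0"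
  shows "lconj f a = enat k"
proof (rule antisym)
  have "lconj f a \<le> lconj f (f (enat k))" using q(1) by (rule lc_mono)
  also have "\<dots> \<le> enat k" by (rule lc_prop)
  finally show "lconj f a \<le> enat k" .
  have "enat (k - 1) + 1 \<le> lconj f a" by (rule lc_lower[OF f a q(2)])
  then show "enat k \<le> lconj f a" using q(3) by (simp add: one_enat_def)
qed

lemma lc_c: assumes f: "f \<in> W" and a: "a \<noteq> 0" "a \<noteq> \<infinity>" and q: "f \<infinity> < a"
  shows "lconj f a = \<infinity>"
  using lc_lower[OF f a q] by (simp add: top_unique[unfolded top_enat_def])

lemma lc_A: assumes f: "f \<in> W" and A: "\<forall>n. f (enat n) < f \<infinity>"
  shows "lconj f \<infinity> = \<infinity>" "\<forall>n. lconj f (enat n) < lconj f \<infinity>"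
proof -
  have fi: "f \<infinity> = \<infinity>" using A_inf[OF f A] .
  have "enat k + 1 \<le> lconj f \<infinity>" for k
  proof -
    have fk: "f (enat k) \<noteq> \<infinity>" using A fi by (metis order_less_irrefl)
    obtain i where fki: "f (enat k) = enat i" using fk by auto
    have e1: "f (enat k) + 1 = enat (i + 1)" by (simp add: fki one_enat_def)
    have "enat k + 1 \<le> lconj f (f (enat k) + 1)"
      unfolding e1 by (intro lc_lower[OF f]) (auto simp: fki zero_enat_def)
    also have "\<dots> \<le> lconj f \<infinity>" by (rule lc_mono) simp
    finally show ?thesis .
  qed
  then have "enat k \<le> lconj f \<infinity>" for k
    using order_trans[of "enat k" "enat k + 1" "lconj f \<infinity>"] by (simp add: one_enat_def)
  then show li: "lconj f \<infinity> = \<infinity>" by (rule all_le_inf)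
  show "\<forall>n. lconj f (enat n) < lconj f \<infinity>"
  proof
    fix n
    obtain m where "enat n < f (enat m)" using tw_unb[OF f fi, of "enat n"] by auto
    then have "lconj f (enat n) \<le> lconj f (f (enat m))" by (intro lc_mono) simp
    also have "\<dots> \<le> enat m" by (rule lc_prop)
    finally show "lconj f (enat n) < lconj f \<infinity>" using li by (cases "lconj f (enat n)") auto
  qed
qed

section \<open>oconj\<close>

lemma oc_W: "oconj f \<in> W" unfolding oconj_def by (rule ldiv_W)
lemma oc_prop: "topW (oconj f p) \<le> f p"
  unfolding oconj_def using ldiv_prop[OF W_top, of f p] by simp

lemma oc_fin: assumes f: "f \<in> W" and p: "p \<noteq> \<infinity>"
  shows "oconj f p = (if f p = \<infinity> then \<infinity> else 0)"
proof (cases "f p = \<infinity>")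
  case True
  then have p0: "p \<noteq> 0" using f by auto
  have "topW \<circ> step p \<infinity> \<le> f"
  proof (rule le_funI)
    fix r show "(topW \<circ> step p \<infinity>) r \<le> f r"
    proof (cases "r < p")
      case False
      then have "f p \<le> f r" using tw_mono[OF f] by simp
      then show ?thesis using True False by (simp add: step_def top_unique[unfolded top_enat_def])
    qed (simp add: step_def topW_def)
  qed
  then have "step p \<infinity> \<le> oconj f" unfolding oconj_def by (intro ldiv_upper step_W p0 p)
  then have "step p \<infinity> p \<le> oconj f p" by (simp add: le_fun_def)
  then show ?thesis using True by (simp add: step_def top_unique[unfolded top_enat_def])
next
  case False
  then show ?thesis using oc_prop[of f p] by (auto simp: topW_def split: if_splits)
qed

lemma oc_inf: assumes f: "f \<in> W"
  shows "oconj f \<infinity> = (if \<exists>n. f (enat n) = \<infinity> then \<infinity> else 0)"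
proof -
  have e: "oconj f \<infinity> = (SUP n. oconj f (enat n))" by (rule tw_inf[OF oc_W])
  show ?thesis
  proof (cases "\<exists>n. f (enat n) = \<infinity>")
    case True
    then obtain n where "f (enat n) = \<infinity>" by auto
    then have "oconj f (enat n) = \<infinity>" using oc_fin[OF f] by simp
    moreover have "oconj f (enat n) \<le> oconj f \<infinity>" by (rule tw_mono[OF oc_W]) simp
    ultimately show ?thesis using True by (simp add: top_unique[unfolded top_enat_def])
  next
    case False
    then have "oconj f (enat n) = 0" for n using oc_fin[OF f] by simp
    then show ?thesis using e False by simp
  qed
qed

lemma oc_vals: "f \<in> W \<Longrightarrow> oconj f p \<in> {0, \<infinity>}"
  by (cases "p = \<infinity>") (auto simp: oc_inf oc_fin)

section \<open>last point\<close>

definition lastpt :: "(enat \<Rightarrow> enat) \<Rightarrow> enat" where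
  "lastpt f = (LEAST q. f q = f \<infinity>)"

lemma lp_val: "f (lastpt f) = f \<infinity>"
  unfolding lastpt_def by (rule LeastI[of _ \<infinity>]) simp
lemma lp_le: "f q = f \<infinity> \<Longrightarrow> lastpt f \<le> q"
  unfolding lastpt_def by (rule Least_le)

lemma lp_S5: assumes f: "f \<in> W" shows "lastpt f \<le> a \<longleftrightarrow> f a = f (lastpt f)"
proof
  assume "lastpt f \<le> a"
  then have "f (lastpt f) \<le> f a" "f a \<le> f \<infinity>" using tw_mono[OF f] by auto
  then show "f a = f (lastpt f)" using lp_val[of f] by simp
next
  assume "f a = f (lastpt f)" then show "lastpt f \<le> a" using lp_val[of f] by (intro lp_le) simp
qed

lemma lp_fin: "f (enat n) = f \<infinity> \<Longrightarrow> lastpt f \<noteq> \<infinity>"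
  by (metis infinity_ileE lp_le)

lemma lp_S6: assumes f: "f \<in> W" and "lastpt f = \<infinity>" shows "f \<infinity> = \<infinity>"
proof (rule ccontr)
  assume "f \<infinity> \<noteq> \<infinity>"
  then obtain n where "f (enat n) = f \<infinity>" using tw_attained[OF f] by blast
  then have "lastpt f \<noteq> \<infinity>" by (rule lp_fin)
  then show False using assms(2) by simp
qed

lemma lp_bot: "lastpt botW = 0"
proof -
  have "lastpt botW \<le> 0" by (rule lp_le) (simp add: botW_def)
  then show ?thesis by simp
qed



lemma eval_W: "valuation \<theta> \<Longrightarrow> eval \<theta> t \<in> W"
  by (induction t) (auto simp: valuation_def W_comp oc_W lc_W rc_W W_id W_bot)

lemma fin_enat: "(a::enat) \<noteq> \<infinity> \<Longrightarrow> \<exists>n. a = enat n" by (cases a) auto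

lemma sR2: assumes f: "f \<in> W" and a: "0 < a" "a < \<infinity>" "rconj f a < \<infinity>"
  shows "a < f (oplus1 (rconj f a))"
proof (rule ccontr)
  let ?q = "rconj f a"
  assume "\<not> a < f (oplus1 ?q)"
  then have "f (?q + 1) \<le> a" using a by (simp add: oplus1_def not_less)
  then have "?q + 1 \<le> ?q" using a by (intro rc_lower[OF f]) auto
  then show False using a(3) by (cases ?q) (auto simp: one_enat_def)
qed

lemma sR3: assumes f: "f \<in> W" and l: "lastpt (rconj f) = \<infinity>" shows "lastpt f = \<infinity>"
proof (rule ccontr)
  assume M: "lastpt f \<noteq> \<infinity>"
  show False
  proof (cases "f \<infinity> = \<infinity>")
    case False
    define a where "a = max (f \<infinity>) 1"
    have a: "a \<noteq> 0" "a \<noteq> \<infinity>" using False by (auto simp: a_def max_def one_enat_def zero_enat_def)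
    have ra: "rconj f a = \<infinity>" using a by (intro rc_c[OF f]) (auto simp: a_def)
    have "rconj f a \<le> rconj f \<infinity>" by (rule rc_mono) simp
    then have "rconj f \<infinity> = \<infinity>" using ra by (simp add: top_unique[unfolded top_enat_def])
    obtain n where "a = enat n" using a fin_enat by blast
    then have "rconj f (enat n) = rconj f \<infinity>" using ra \<open>rconj f \<infinity> = \<infinity>\<close> by simp
    then show False using lp_fin l by blast
  next
    case True
    have fM: "f (lastpt f) = \<infinity>" using lp_val[of f] True by simp
    have "rconj f (enat n) \<le> lastpt f" for n
    proof (rule ccontr)
      assume "\<not> rconj f (enat n) \<le> lastpt f"
      then have "f (lastpt f) \<le> f (rconj f (enat n))" using tw_mono[OF f] by simp
      then show False using rc_prop[OF f, of "enat n"] fM by simp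
    qed
    then have "rconj f \<infinity> \<le> lastpt f" using tw_inf[OF rc_W, of f] by (simp add: SUP_le_iff)
    then have "rconj f \<infinity> \<noteq> \<infinity>" using M by (cases "lastpt f"; cases "rconj f \<infinity>") auto
    then obtain n where "rconj f (enat n) = rconj f \<infinity>" using tw_attained[OF rc_W] by blast
    then show False using lp_fin l by blast
  qed
qed

lemma sR4: assumes f: "f \<in> W" and V: "rconj f (lastpt (rconj f)) < \<infinity>"
  shows "f (oplus1 (rconj f (lastpt (rconj f)))) = \<infinity>"
proof (rule ccontr)
  let ?V = "rconj f \<infinity>"
  have eV: "rconj f (lastpt (rconj f)) = ?V" by (rule lp_val)
  assume "f (oplus1 (rconj f (lastpt (rconj f)))) \<noteq> \<infinity>"
  then have c: "f (?V + 1) \<noteq> \<infinity>" using V eV by (simp add: oplus1_def)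
  define a where "a = max (f (?V + 1)) 1"
  have a: "a \<noteq> 0" "a \<noteq> \<infinity>" using c by (auto simp: a_def max_def one_enat_def zero_enat_def)
  have "?V + 1 \<le> rconj f a" using a by (intro rc_lower[OF f]) (auto simp: a_def)
  also have "\<dots> \<le> ?V" by (rule rc_mono) simp
  finally show False using V eV by (cases ?V) (auto simp: one_enat_def)
qed

lemma sL1: assumes f: "f \<in> W" and q: "lconj f a < \<infinity>" shows "a \<le> f (lconj f a)"
proof (rule ccontr)
  let ?q = "lconj f a"
  assume "\<not> a \<le> f ?q"
  then have lt: "f ?q < a" by simp
  then have fq: "f ?q \<noteq> \<infinity>" by (cases "f ?q") auto
  define a' where "a' = f ?q + 1"
  have a': "a' \<noteq> 0" "a' \<noteq> \<infinity>" "f ?q < a'" using fq by (auto simp: a'_def one_enat_def zero_enat_def elim!: less_infinityE dest!: fin_enat)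
  have "?q + 1 \<le> lconj f a'" by (rule lc_lower[OF f a'])
  also have "\<dots> \<le> lconj f a" using lt by (intro lc_mono) (simp add: a'_def enat_plus1_le)
  finally show False using q by (cases ?q) (auto simp: one_enat_def)
qed

lemma sL2: assumes f: "f \<in> W" and a: "0 < a" "a < \<infinity>" "lconj f a < \<infinity>"
  shows "f (ominus1 (lconj f a)) < a"
proof -
  obtain k where k: "lconj f a = enat k" using a(3) fin_enat by auto
  have "a \<le> f (enat k)" using sL1[OF f a(3)] k by simp
  then have k0: "k > 0"
  proof (rule contrapos_pp)
    assume "\<not> k > 0"
    then have "enat k = 0" by (simp add: zero_enat_def)
    then show "\<not> a \<le> f (enat k)" using a(1) f by simp
  qed
  then have om: "ominus1 (lconj f a) = enat (k - 1)" using k by (simp add: ominus1_def zero_enat_def one_enat_def)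
  show ?thesis
  proof (rule ccontr)
    assume "\<not> f (ominus1 (lconj f a)) < a"
    then have "a \<le> f (enat (k - 1))" using om by simp
    then have "lconj f a \<le> lconj f (f (enat (k - 1)))" by (rule lc_mono)
    also have "\<dots> \<le> enat (k - 1)" by (rule lc_prop)
    finally show False using k k0 by simp
  qed
qed

lemma sL3: assumes f: "f \<in> W" and a: "a < \<infinity>" "lconj f a = \<infinity>"
  shows "f (lconj f a) < a"
proof (rule ccontr)
  assume "\<not> f (lconj f a) < a"
  then have le: "a \<le> f \<infinity>" using a by simp
  obtain n where n: "a \<le> f (enat n)"
  proof (cases "f \<infinity> = \<infinity>")
    case True
    then obtain n where "a < f (enat n)" using tw_unb[OF f True a(1)] by auto
    then show ?thesis using that[of n] by (simp add: less_imp_le)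
  next
    case False
    then obtain n where "f (enat n) = f \<infinity>" using tw_attained[OF f] by blast
    then show ?thesis using that[of n] le by simp
  qed
  then have "lconj f a \<le> lconj f (f (enat n))" by (rule lc_mono)
  also have "\<dots> \<le> enat n" by (rule lc_prop)
  finally show False using a by simp
qed

lemma sL4: assumes f: "f \<in> W" and l: "lastpt (lconj f) = \<infinity>" shows "lastpt f = \<infinity>"
proof (rule ccontr)
  assume M: "lastpt f \<noteq> \<infinity>"
  show False
  proof (cases "f \<infinity> = \<infinity>")
    case False
    then obtain c where c: "f \<infinity> = enat c" using fin_enat by blast
    have la: "lconj f (enat (c + 1)) = \<infinity>" using c by (intro lc_c[OF f]) (auto simp: zero_enat_def)
    have "lconj f (enat (c + 1)) \<le> lconj f \<infinity>" by (rule lc_mono) simp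
    then have "lconj f (enat (c + 1)) = lconj f \<infinity>" using la by (simp add: top_unique[unfolded top_enat_def])
    then show False using lp_fin l by blast
  next
    case True
    have fM: "f (lastpt f) = \<infinity>" using lp_val[of f] True by simp
    have "lconj f \<infinity> \<le> lastpt f" using lc_prop[of f "lastpt f"] fM by simp
    then have "lconj f \<infinity> \<noteq> \<infinity>" using M by (cases "lastpt f"; cases "lconj f \<infinity>") auto
    then obtain n where "lconj f (enat n) = lconj f \<infinity>" using tw_attained[OF lc_W] by blast
    then show False using lp_fin l by blast
  qed
qed

lemma sL5: assumes f: "f \<in> W" and q: "lconj f (lastpt (lconj f)) < \<infinity>"
  shows "f (lconj f (lastpt (lconj f))) = \<infinity>"
proof -
  have e: "lconj f (lastpt (lconj f)) = lconj f \<infinity>" by (rule lp_val)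
  have "\<infinity> \<le> f (lconj f \<infinity>)" using sL1[OF f, of \<infinity>] q e by simp
  then show ?thesis using e by (simp add: top_unique[unfolded top_enat_def])
qed

lemma sO3: assumes f: "f \<in> W" shows "lastpt (oconj f) < \<infinity>"
proof (cases "\<exists>n. f (enat n) = \<infinity>")
  case True
  then obtain n where "f (enat n) = \<infinity>" by auto
  then have "oconj f (enat n) = oconj f \<infinity>" using oc_fin[OF f] oc_inf[OF f] True by simp
  then show ?thesis using lp_fin by auto
next
  case False
  then have "oconj f (enat 0) = oconj f \<infinity>" using oc_fin[OF f] oc_inf[OF f] by simp
  then show ?thesis using lp_fin by auto
qed

lemma sO4: assumes f: "f \<in> W" and o: "oconj f (lastpt (oconj f)) < \<infinity>" and a: "a < \<infinity>"
  shows "f a < \<infinity>"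
proof -
  have "oconj f \<infinity> < \<infinity>" using o lp_val[of "oconj f"] by simp
  then have "\<not> (\<exists>n. f (enat n) = \<infinity>)" using oc_inf[OF f] by (auto split: if_splits)
  then show ?thesis using a by (auto dest!: fin_enat)
qed

lemma sO2: assumes f: "f \<in> W" and a: "a < \<infinity>" shows "oconj f a = \<infinity> \<longleftrightarrow> f a = \<infinity>"
  using oc_fin[OF f, of a] a by auto

lemma sLC4: assumes f: "f \<in> W" and g: "g \<in> W" and l: "lastpt (f \<circ> g) = \<infinity>"
  shows "lastpt f = \<infinity> \<and> lastpt g = \<infinity>"
proof
  show "lastpt g = \<infinity>"
  proof (rule ccontr)
    assume "lastpt g \<noteq> \<infinity>"
    then obtain m where m: "lastpt g = enat m" using fin_enat by blast
    have "(f \<circ> g) (enat m) = (f \<circ> g) \<infinity>" using lp_val[of g] m by simp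
    then show False using lp_fin l by blast
  qed
  show "lastpt f = \<infinity>"
  proof (rule ccontr)
    assume "lastpt f \<noteq> \<infinity>"
    then obtain m where m: "lastpt f = enat m" using fin_enat by blast
    have fm: "f (enat m) = f \<infinity>" using lp_val[of f] m by simp
    obtain n where "(f \<circ> g) (enat n) = (f \<circ> g) \<infinity>"
    proof (cases "g \<infinity> = \<infinity>")
      case True
      then obtain n where "enat m < g (enat n)" using tw_unb[OF g True, of "enat m"] by auto
      then have "f (enat m) \<le> f (g (enat n))" "f (g (enat n)) \<le> f \<infinity>" using tw_mono[OF f] by auto
      then have "(f \<circ> g) (enat n) = (f \<circ> g) \<infinity>" using fm True by simp
      then show ?thesis using that[of n] by blast
    next
      case False
      then obtain n where "g (enat n) = g \<infinity>" using tw_attained[OF g] by blast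
      then show ?thesis using that[of n] by simp
    qed
    then show False using lp_fin l by blast
  qed
qed

lemma ex_enat: "(\<exists>i. x = enat i) \<longleftrightarrow> x < \<infinity>" by (cases x) auto

fun sem :: "('v \<Rightarrow> (enat \<Rightarrow> enat)) \<Rightarrow> enat \<Rightarrow> ('v, 'k) sample \<Rightarrow> enat" where
  "sem \<theta> p (SVar k) = p"
| "sem \<theta> p (SApp t a) = eval \<theta> t (sem \<theta> p a)"
| "sem \<theta> p (SS a) = oplus1 (sem \<theta> p a)"
| "sem \<theta> p (SP a) = ominus1 (sem \<theta> p a)"
| "sem \<theta> p (SLast t) = lastpt (eval \<theta> t)"

lemma soundness: assumes th: "valuation \<theta>" shows "diagram D (sem \<theta> p)"
proof -
  note E = eval_W[OF th]
  show ?thesis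
  unfolding diagram_def
  apply (intro conjI allI impI)
  apply (simp_all add: E tw_mono lp_S5[OF E] lp_S6[OF E] lp_bot)
  subgoal using sLC4[OF E E] by blast
  subgoal using sLC4[OF E E] by blast
  subgoal using oc_vals[OF E] by auto
  subgoal unfolding ex_enat using sO2[OF E] by blast
  subgoal unfolding ex_enat by (rule sO3[OF E])
  subgoal unfolding ex_enat using sO4[OF E] by blast
  subgoal by (rule rc_prop[OF E])
  subgoal unfolding ex_enat by (rule sR2[OF E]) (auto simp: zero_less_iff_neq_zero)
  subgoal using sR3[OF E] by blast
  subgoal unfolding ex_enat using sR4[OF E] by blast
  subgoal unfolding ex_enat using sL1[OF E] by blast
  subgoal unfolding ex_enat by (rule sL2[OF E]) (auto simp: zero_less_iff_neq_zero)
  subgoal for t a unfolding ex_enat using sL3[OF E, of "sem \<theta> p a" t] by simp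
  subgoal using sL4[OF E] by blast
  subgoal unfolding ex_enat using sL5[OF E] by blast
  done
qed



fun post :: "'v bterm \<Rightarrow> 'v bterm list" where
  "post (TComp t u) = post t @ post u @ [TComp t u]"
| "post (TO t) = post t @ [TO t]"
| "post (TL t) = post t @ [TL t]"
| "post (TR t) = post t @ [TR t]"
| "post (TVar x) = [TVar x]"
| "post TId = [TId]"
| "post TBot = [TBot]"

lemma post_ne: "post s \<noteq> []" by (cases s) auto
lemma post_last: "post s ! (length (post s) - 1) = s" by (cases s) (auto simp: nth_append)
lemma post_last': "post s ! (length (post s) - Suc 0) = s" using post_last by simp

lemma post_block: "j < length (post t0) \<Longrightarrow> post t0 ! j = s \<Longrightarrow>
  \<exists>xs ys. post t0 = xs @ post s @ ys \<and> length xs + length (post s) = Suc j"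
proof (induction t0 arbitrary: j)
  case (TComp a b)
  consider "j < length (post a)" | "length (post a) \<le> j" "j < length (post a) + length (post b)"
    | "j = length (post a) + length (post b)" using TComp.prems(1) by fastforce
  then show ?case
  proof cases
    case 1
    then obtain xs ys where "post a = xs @ post s @ ys" "length xs + length (post s) = Suc j"
      using TComp.IH(1)[of j] TComp.prems by (auto simp: nth_append)
    then show ?thesis by (intro exI[of _ xs] exI[of _ "ys @ post b @ [TComp a b]"]) simp
  next
    case 2
    have l: "j - length (post a) < length (post b)" using 2 by simp
    have e: "post b ! (j - length (post a)) = s" using TComp.prems(2) 2 l by (simp add: nth_append)
    obtain xs ys where "post b = xs @ post s @ ys" "length xs + length (post s) = Suc (j - length (post a))"
      using TComp.IH(2)[OF l e] by blast
    then show ?thesis using 2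
      by (intro exI[of _ "post a @ xs"] exI[of _ "ys @ [TComp a b]"]) simp
  next
    case 3
    then have "s = TComp a b" using TComp.prems by (simp add: nth_append)
    then show ?thesis using 3 by (intro exI[of _ "[]"] exI[of _ "[]"]) simp
  qed
next
  case (TO a)
  consider "j < length (post a)" | "j = length (post a)" using TO.prems(1) by fastforce
  then show ?case
  proof cases
    case 1
    then obtain xs ys where "post a = xs @ post s @ ys" "length xs + length (post s) = Suc j"
      using TO.IH[of j] TO.prems by (auto simp: nth_append)
    then show ?thesis by (intro exI[of _ xs] exI[of _ "ys @ [TO a]"]) simp
  next
    case 2
    then have "s = TO a" using TO.prems by (simp add: nth_append)
    then show ?thesis using 2 by (intro exI[of _ "[]"] exI[of _ "[]"]) simp
  qed
next
  case (TL a)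
  consider "j < length (post a)" | "j = length (post a)" using TL.prems(1) by fastforce
  then show ?case
  proof cases
    case 1
    then obtain xs ys where "post a = xs @ post s @ ys" "length xs + length (post s) = Suc j"
      using TL.IH[of j] TL.prems by (auto simp: nth_append)
    then show ?thesis by (intro exI[of _ xs] exI[of _ "ys @ [TL a]"]) simp
  next
    case 2
    then have "s = TL a" using TL.prems by (simp add: nth_append)
    then show ?thesis using 2 by (intro exI[of _ "[]"] exI[of _ "[]"]) simp
  qed
next
  case (TR a)
  consider "j < length (post a)" | "j = length (post a)" using TR.prems(1) by fastforce
  then show ?case
  proof cases
    case 1
    then obtain xs ys where "post a = xs @ post s @ ys" "length xs + length (post s) = Suc j"
      using TR.IH[of j] TR.prems by (auto simp: nth_append)
    then show ?thesis by (intro exI[of _ xs] exI[of _ "ys @ [TR a]"]) simp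
  next
    case 2
    then have "s = TR a" using TR.prems by (simp add: nth_append)
    then show ?thesis using 2 by (intro exI[of _ "[]"] exI[of _ "[]"]) simp
  qed
qed (auto intro!: exI[of _ "[]"])

fun good :: "'v bterm list \<Rightarrow> 'k \<Rightarrow> nat \<Rightarrow> ('v, 'k) sample \<Rightarrow> bool" where
  "good T k lo (SVar k') = (k' = k)"
| "good T k lo (SLast t) = (t \<in> set T)"
| "good T k lo (SApp t a) = (\<exists>j. lo \<le> j \<and> j < length T \<and> T ! j = t \<and> good T k (Suc j) a)"
| "good T k lo (SS a) = ((\<exists>t b. a = SApp t b) \<and> good T k lo a)"
| "good T k lo (SP a) = ((\<exists>t b. a = SApp t b) \<and> good T k lo a)"

lemma good_mono: "good T k lo' a \<Longrightarrow> lo \<le> lo' \<Longrightarrow> good T k lo a"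
  proof (induction a arbitrary: lo lo')
  case (SApp t a) then show ?case by (auto intro: le_trans)
qed auto

lemma good_finite: "finite {a. good T k lo a}"
proof (induction "length T - lo" arbitrary: lo rule: less_induct)
  case less
  define B where "B = (\<Union>j\<in>{lo..<length T}. SApp (T ! j) ` {a. good T k (Suc j) a})"
  have fB: "finite B" unfolding B_def using less by (auto intro!: finite_UN_I)
  have "{a. good T k lo a} \<subseteq> {SVar k} \<union> SLast ` set T \<union> B \<union> SS ` B \<union> SP ` B"
  proof
    fix a assume "a \<in> {a. good T k lo a}"
    then have ga: "good T k lo a" by simp
    have inB: "good T k lo (SApp t b) \<Longrightarrow> SApp t b \<in> B" for t b by (auto simp: B_def)
    show "a \<in> {SVar k} \<union> SLast ` set T \<union> B \<union> SS ` B \<union> SP ` B"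
    proof (cases a)
      case (SS c)
      then obtain t b where "c = SApp t b" "good T k lo (SApp t b)" using ga by auto
      then show ?thesis using SS inB by blast
    next
      case (SP c)
      then obtain t b where "c = SApp t b" "good T k lo (SApp t b)" using ga by auto
      then show ?thesis using SP inB by blast
    next
      case (SApp t b) then show ?thesis using inB ga by blast
    qed (use ga in auto)
  qed
  moreover have "finite ({SVar k} \<union> SLast ` set T \<union> B \<union> SS ` B \<union> SP ` B)" using fB by simp
  ultimately show ?case by (rule finite_subset)
qed

lemma nth_mid: "i < length zs \<Longrightarrow> (xs @ zs @ ys) ! (length xs + i) = zs ! i"
  by (simp add: nth_append)

lemma good_leads: assumes "leads a b" "good (post t0) k 0 a" shows "good (post t0) k 0 b"
  using assms
proof (induction rule: leads.induct)
  case (app_arg t a) then show ?case by (auto intro: good_mono)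
next
  case (s_arg a) then show ?case by auto
next
  case (p_arg a) then show ?case by auto
next
  case (comp t u a)
  let ?T = "post t0"
  obtain j where j: "j < length ?T" "?T ! j = TComp t u" "good ?T k (Suc j) a" using comp by auto
  obtain xs ys where b: "?T = xs @ post (TComp t u) @ ys" "length xs + length (post (TComp t u)) = Suc j"
    using post_block[OF j(1,2)] by blast
  let ?jt = "length xs + (length (post t) - 1)"
  let ?ju = "length xs + (length (post t) + (length (post u) - 1))"
  have lt: "length (post t) > 0" "length (post u) > 0" using post_ne by auto
  have Tt: "?T ! ?jt = t" unfolding b(1) by (subst nth_mid) (use lt in \<open>auto simp: nth_append post_last post_last'\<close>)
  have Tu: "?T ! ?ju = u" unfolding b(1) by (subst nth_mid) (use lt in \<open>auto simp: nth_append post_last post_last'\<close>)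
  have ju: "Suc ?ju = j" using b(2) lt by (simp del: length_greater_0_conv)
  have "good ?T k (Suc ?ju) a" using good_mono[OF j(3), of "Suc ?ju"] ju by simp
  moreover have "Suc ?jt \<le> ?ju" using lt by (simp del: length_greater_0_conv)
  moreover have "?ju < length ?T" using ju j(1) by simp
  ultimately have g1: "good ?T k (Suc ?jt) (SApp u a)" using Tu unfolding good.simps by blast
  have "?jt < length ?T" using ju j(1) by simp
  then show ?case using Tt g1 unfolding good.simps by blast
next
  case (o_un t a)
  let ?T = "post t0"
  obtain j where j: "j < length ?T" "?T ! j = TO t" "good ?T k (Suc j) a" using o_un by auto
  obtain xs ys where b: "?T = xs @ post (TO t) @ ys" "length xs + length (post (TO t)) = Suc j"
    using post_block[OF j(1,2)] by blast
  let ?jt = "length xs + (length (post t) - 1)"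
  have lt: "length (post t) > 0" using post_ne by auto
  have Tt: "?T ! ?jt = t" unfolding b(1) by (subst nth_mid) (use lt in \<open>auto simp: nth_append post_last post_last'\<close>)
  have ju: "Suc ?jt = j" using b(2) lt by (simp del: length_greater_0_conv)
  have "good ?T k (Suc ?jt) a" using good_mono[OF j(3), of "Suc ?jt"] ju by simp
  moreover have "?jt < length ?T" using ju j(1) by simp
  ultimately show ?case using Tt unfolding good.simps by blast
next
  case (r1 t a)
  let ?T = "post t0"
  obtain j where j: "j < length ?T" "?T ! j = TR t" "good ?T k (Suc j) a" using r1 by auto
  obtain xs ys where b: "?T = xs @ post (TR t) @ ys" "length xs + length (post (TR t)) = Suc j"
    using post_block[OF j(1,2)] by blast
  let ?jt = "length xs + (length (post t) - 1)"
  have lt: "length (post t) > 0" using post_ne by auto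
  have Tt: "?T ! ?jt = t" unfolding b(1) by (subst nth_mid) (use lt in \<open>auto simp: nth_append post_last post_last'\<close>)
  have ju: "Suc ?jt = j" using b(2) lt by (simp del: length_greater_0_conv)
  have jl: "?jt < length ?T" using ju j(1) by simp
  have gi: "good ?T k (Suc ?jt) (SApp (TR t) a)" unfolding good.simps using ju j by (intro exI[of _ j]) simp
  show ?case using Tt jl gi unfolding good.simps by blast
next
  case (r2 t a)
  let ?T = "post t0"
  obtain j where j: "j < length ?T" "?T ! j = TR t" "good ?T k (Suc j) a" using r2 by auto
  obtain xs ys where b: "?T = xs @ post (TR t) @ ys" "length xs + length (post (TR t)) = Suc j"
    using post_block[OF j(1,2)] by blast
  let ?jt = "length xs + (length (post t) - 1)"
  have lt: "length (post t) > 0" using post_ne by auto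
  have Tt: "?T ! ?jt = t" unfolding b(1) by (subst nth_mid) (use lt in \<open>auto simp: nth_append post_last post_last'\<close>)
  have ju: "Suc ?jt = j" using b(2) lt by (simp del: length_greater_0_conv)
  have jl: "?jt < length ?T" using ju j(1) by simp
  have gi: "good ?T k (Suc ?jt) (SApp (TR t) a)" unfolding good.simps using ju j by (intro exI[of _ j]) simp
  show ?case using Tt jl gi unfolding good.simps by blast
next
  case (l1 t a)
  let ?T = "post t0"
  obtain j where j: "j < length ?T" "?T ! j = TL t" "good ?T k (Suc j) a" using l1 by auto
  obtain xs ys where b: "?T = xs @ post (TL t) @ ys" "length xs + length (post (TL t)) = Suc j"
    using post_block[OF j(1,2)] by blast
  let ?jt = "length xs + (length (post t) - 1)"
  have lt: "length (post t) > 0" using post_ne by auto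
  have Tt: "?T ! ?jt = t" unfolding b(1) by (subst nth_mid) (use lt in \<open>auto simp: nth_append post_last post_last'\<close>)
  have ju: "Suc ?jt = j" using b(2) lt by (simp del: length_greater_0_conv)
  have jl: "?jt < length ?T" using ju j(1) by simp
  have gi: "good ?T k (Suc ?jt) (SApp (TL t) a)" unfolding good.simps using ju j by (intro exI[of _ j]) simp
  show ?case using Tt jl gi unfolding good.simps by blast
next
  case (l2 t a)
  let ?T = "post t0"
  obtain j where j: "j < length ?T" "?T ! j = TL t" "good ?T k (Suc j) a" using l2 by auto
  obtain xs ys where b: "?T = xs @ post (TL t) @ ys" "length xs + length (post (TL t)) = Suc j"
    using post_block[OF j(1,2)] by blast
  let ?jt = "length xs + (length (post t) - 1)"
  have lt: "length (post t) > 0" using post_ne by auto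
  have Tt: "?T ! ?jt = t" unfolding b(1) by (subst nth_mid) (use lt in \<open>auto simp: nth_append post_last post_last'\<close>)
  have ju: "Suc ?jt = j" using b(2) lt by (simp del: length_greater_0_conv)
  have jl: "?jt < length ?T" using ju j(1) by simp
  have gi: "good ?T k (Suc ?jt) (SApp (TL t) a)" unfolding good.simps using ju j by (intro exI[of _ j]) simp
  show ?case using Tt jl gi unfolding good.simps by blast
next
  case (last t a)
  then show ?case by (auto intro: nth_mem)
qed

lemma sat_finite: "finite (saturation ((\<lambda>t. SApp t (SVar k)) ` set ts))"
proof -
  have "saturation ((\<lambda>t. SApp t (SVar k)) ` set ts) \<subseteq> (\<Union>t\<in>set ts. {a. good (post t) k 0 a})"
  proof
    fix b assume "b \<in> saturation ((\<lambda>t. SApp t (SVar k)) ` set ts)"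
    then obtain t where t: "t \<in> set ts" "leads\<^sup>*\<^sup>* (SApp t (SVar k)) b" unfolding saturation_def by auto
    have g0: "good (post t) k 0 (SApp t (SVar k))"
      using post_last[of t] post_ne[of t]
      by (auto intro!: exI[of _ "length (post t) - 1"])
    have "good (post t) k 0 b" using t(2) g0
      by (induction rule: rtranclp_induct) (auto intro: good_leads)
    then show "b \<in> (\<Union>t\<in>set ts. {a. good (post t) k 0 a})" using t(1) by auto
  qed
  moreover have "finite (\<Union>t\<in>set ts. {a. good (post t) k 0 a})" by (auto intro: good_finite)
  ultimately show ?thesis by (rule finite_subset)
qed




lemma Sup_fin_lt: "finite (A::enat set) \<Longrightarrow> (\<forall>a\<in>A. a < \<infinity>) \<Longrightarrow> Sup A < \<infinity>"
  by (cases "A = {}") (auto simp: Sup_enat_def bot_enat_def zero_enat_def)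

locale cmp =
  fixes D :: "('v, 'k) sample set" and \<delta> :: "('v, 'k) sample \<Rightarrow> enat"
  assumes diag: "diagram D \<delta>" and closed: "\<And>a b. a \<in> D \<Longrightarrow> leads a b \<Longrightarrow> b \<in> D"
    and finD: "finite D"
begin

lemmas d = diag[unfolded diagram_def]
lemmas S1 = d[THEN conjunct1, rule_format, unfolded conj_imp_eq_imp_imp]
lemmas S2 = d[THEN conjunct2, THEN conjunct1, rule_format, unfolded conj_imp_eq_imp_imp]
lemmas S3 = d[THEN conjunct2, THEN conjunct2, THEN conjunct1, rule_format, unfolded conj_imp_eq_imp_imp]
lemmas S4 = d[THEN conjunct2, THEN conjunct2, THEN conjunct2, THEN conjunct1, rule_format, unfolded conj_imp_eq_imp_imp]
lemmas S5 = d[THEN conjunct2, THEN conjunct2, THEN conjunct2, THEN conjunct2, THEN conjunct1, rule_format, unfolded conj_imp_eq_imp_imp]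
lemmas S6 = d[THEN conjunct2, THEN conjunct2, THEN conjunct2, THEN conjunct2, THEN conjunct2, THEN conjunct1, rule_format, unfolded conj_imp_eq_imp_imp]
lemmas L1 = d[THEN conjunct2, THEN conjunct2, THEN conjunct2, THEN conjunct2, THEN conjunct2, THEN conjunct2, THEN conjunct1, rule_format, unfolded conj_imp_eq_imp_imp]
lemmas L2 = d[THEN conjunct2, THEN conjunct2, THEN conjunct2, THEN conjunct2, THEN conjunct2, THEN conjunct2, THEN conjunct2, THEN conjunct1, rule_format, unfolded conj_imp_eq_imp_imp]
lemmas L3 = d[THEN conjunct2, THEN conjunct2, THEN conjunct2, THEN conjunct2, THEN conjunct2, THEN conjunct2, THEN conjunct2, THEN conjunct2, THEN conjunct1, rule_format, unfolded conj_imp_eq_imp_imp]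
lemmas L4 = d[THEN conjunct2, THEN conjunct2, THEN conjunct2, THEN conjunct2, THEN conjunct2, THEN conjunct2, THEN conjunct2, THEN conjunct2, THEN conjunct2, THEN conjunct1, rule_format, unfolded conj_imp_eq_imp_imp]
lemmas O1 = d[THEN conjunct2, THEN conjunct2, THEN conjunct2, THEN conjunct2, THEN conjunct2, THEN conjunct2, THEN conjunct2, THEN conjunct2, THEN conjunct2, THEN conjunct2, THEN conjunct1, rule_format, unfolded conj_imp_eq_imp_imp]
lemmas O2 = d[THEN conjunct2, THEN conjunct2, THEN conjunct2, THEN conjunct2, THEN conjunct2, THEN conjunct2, THEN conjunct2, THEN conjunct2, THEN conjunct2, THEN conjunct2, THEN conjunct2, THEN conjunct1, rule_format, unfolded conj_imp_eq_imp_imp]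
lemmas O3 = d[THEN conjunct2, THEN conjunct2, THEN conjunct2, THEN conjunct2, THEN conjunct2, THEN conjunct2, THEN conjunct2, THEN conjunct2, THEN conjunct2, THEN conjunct2, THEN conjunct2, THEN conjunct2, THEN conjunct1, rule_format, unfolded conj_imp_eq_imp_imp]
lemmas O4 = d[THEN conjunct2, THEN conjunct2, THEN conjunct2, THEN conjunct2, THEN conjunct2, THEN conjunct2, THEN conjunct2, THEN conjunct2, THEN conjunct2, THEN conjunct2, THEN conjunct2, THEN conjunct2, THEN conjunct2, THEN conjunct1, rule_format, unfolded conj_imp_eq_imp_imp]
lemmas R1 = d[THEN conjunct2, THEN conjunct2, THEN conjunct2, THEN conjunct2, THEN conjunct2, THEN conjunct2, THEN conjunct2, THEN conjunct2, THEN conjunct2, THEN conjunct2, THEN conjunct2, THEN conjunct2, THEN conjunct2, THEN conjunct2, THEN conjunct1, rule_format, unfolded conj_imp_eq_imp_imp]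
lemmas R2 = d[THEN conjunct2, THEN conjunct2, THEN conjunct2, THEN conjunct2, THEN conjunct2, THEN conjunct2, THEN conjunct2, THEN conjunct2, THEN conjunct2, THEN conjunct2, THEN conjunct2, THEN conjunct2, THEN conjunct2, THEN conjunct2, THEN conjunct2, THEN conjunct1, rule_format, unfolded conj_imp_eq_imp_imp]
lemmas R3 = d[THEN conjunct2, THEN conjunct2, THEN conjunct2, THEN conjunct2, THEN conjunct2, THEN conjunct2, THEN conjunct2, THEN conjunct2, THEN conjunct2, THEN conjunct2, THEN conjunct2, THEN conjunct2, THEN conjunct2, THEN conjunct2, THEN conjunct2, THEN conjunct2, THEN conjunct1, rule_format, unfolded conj_imp_eq_imp_imp]
lemmas R4 = d[THEN conjunct2, THEN conjunct2, THEN conjunct2, THEN conjunct2, THEN conjunct2, THEN conjunct2, THEN conjunct2, THEN conjunct2, THEN conjunct2, THEN conjunct2, THEN conjunct2, THEN conjunct2, THEN conjunct2, THEN conjunct2, THEN conjunct2, THEN conjunct2, THEN conjunct2, THEN conjunct1, rule_format, unfolded conj_imp_eq_imp_imp]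
lemmas La1 = d[THEN conjunct2, THEN conjunct2, THEN conjunct2, THEN conjunct2, THEN conjunct2, THEN conjunct2, THEN conjunct2, THEN conjunct2, THEN conjunct2, THEN conjunct2, THEN conjunct2, THEN conjunct2, THEN conjunct2, THEN conjunct2, THEN conjunct2, THEN conjunct2, THEN conjunct2, THEN conjunct2, THEN conjunct1, rule_format, unfolded conj_imp_eq_imp_imp]
lemmas La2 = d[THEN conjunct2, THEN conjunct2, THEN conjunct2, THEN conjunct2, THEN conjunct2, THEN conjunct2, THEN conjunct2, THEN conjunct2, THEN conjunct2, THEN conjunct2, THEN conjunct2, THEN conjunct2, THEN conjunct2, THEN conjunct2, THEN conjunct2, THEN conjunct2, THEN conjunct2, THEN conjunct2, THEN conjunct2, THEN conjunct1, rule_format, unfolded conj_imp_eq_imp_imp]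
lemmas La3 = d[THEN conjunct2, THEN conjunct2, THEN conjunct2, THEN conjunct2, THEN conjunct2, THEN conjunct2, THEN conjunct2, THEN conjunct2, THEN conjunct2, THEN conjunct2, THEN conjunct2, THEN conjunct2, THEN conjunct2, THEN conjunct2, THEN conjunct2, THEN conjunct2, THEN conjunct2, THEN conjunct2, THEN conjunct2, THEN conjunct2, THEN conjunct1, rule_format, unfolded conj_imp_eq_imp_imp]
lemmas La4 = d[THEN conjunct2, THEN conjunct2, THEN conjunct2, THEN conjunct2, THEN conjunct2, THEN conjunct2, THEN conjunct2, THEN conjunct2, THEN conjunct2, THEN conjunct2, THEN conjunct2, THEN conjunct2, THEN conjunct2, THEN conjunct2, THEN conjunct2, THEN conjunct2, THEN conjunct2, THEN conjunct2, THEN conjunct2, THEN conjunct2, THEN conjunct2, THEN conjunct1, rule_format, unfolded conj_imp_eq_imp_imp]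
lemmas La5 = d[THEN conjunct2, THEN conjunct2, THEN conjunct2, THEN conjunct2, THEN conjunct2, THEN conjunct2, THEN conjunct2, THEN conjunct2, THEN conjunct2, THEN conjunct2, THEN conjunct2, THEN conjunct2, THEN conjunct2, THEN conjunct2, THEN conjunct2, THEN conjunct2, THEN conjunct2, THEN conjunct2, THEN conjunct2, THEN conjunct2, THEN conjunct2, THEN conjunct2, rule_format, unfolded conj_imp_eq_imp_imp]

definition Dx where "Dx x = {b. SApp (TVar x) b \<in> D}"
definition g0 where "g0 x p = (SUP b\<in>{b \<in> Dx x. \<delta> b \<le> p}. \<delta> (SApp (TVar x) b))"
definition Mx where "Mx x = Sup (\<delta> ` {b \<in> Dx x. \<delta> b < \<infinity>})"
definition vw where "vw x = (if Dx x = {} then id else if \<delta> (SLast (TVar x)) = \<infinity> then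
   (\<lambda>p. case p of enat n \<Rightarrow> g0 x p + enat (n - the_enat (Mx x)) | \<infinity> \<Rightarrow> \<infinity>) else g0 x)"

lemma vw_fin: "Dx x \<noteq> {} \<Longrightarrow> \<delta> (SLast (TVar x)) \<noteq> \<infinity> \<Longrightarrow> vw x = g0 x"
  unfolding vw_def by (simp only: if_False if_True simp_thms)
lemma vw_inf: "Dx x \<noteq> {} \<Longrightarrow> \<delta> (SLast (TVar x)) = \<infinity> \<Longrightarrow>
  vw x = (\<lambda>p. case p of enat n \<Rightarrow> g0 x p + enat (n - the_enat (Mx x)) | \<infinity> \<Rightarrow> \<infinity>)"
  unfolding vw_def by (simp only: if_False if_True simp_thms)

lemma Dx_D: "b \<in> Dx x \<Longrightarrow> b \<in> D" unfolding Dx_def using closed leads.app_arg by blast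

lemma Dx_last: assumes "b \<in> Dx x" shows "SLast (TVar x) \<in> Dx x" "SLast (TVar x) \<in> D"
proof -
  have "SApp (TVar x) (SLast (TVar x)) \<in> D" using assms closed leads.last unfolding Dx_def by blast
  then show "SLast (TVar x) \<in> Dx x" unfolding Dx_def by simp
  then show "SLast (TVar x) \<in> D" by (rule Dx_D)
qed

lemma g0_mono: "p \<le> q \<Longrightarrow> g0 x p \<le> g0 x q"
  unfolding g0_def by (rule SUP_subset_mono) auto

lemma g0_at: assumes b: "b \<in> Dx x" shows "g0 x (\<delta> b) = \<delta> (SApp (TVar x) b)"
  unfolding g0_def
proof (rule antisym)
  show "(SUP b\<in>{b' \<in> Dx x. \<delta> b' \<le> \<delta> b}. \<delta> (SApp (TVar x) b)) \<le> \<delta> (SApp (TVar x) b)"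
  proof (rule SUP_least)
    fix b' assume "b' \<in> {b' \<in> Dx x. \<delta> b' \<le> \<delta> b}"
    then have b': "b' \<in> Dx x" "\<delta> b' \<le> \<delta> b" by auto
    show "\<delta> (SApp (TVar x) b') \<le> \<delta> (SApp (TVar x) b)"
      by (rule S1[OF Dx_D[OF b'(1)] Dx_D[OF b] _ _ b'(2)]) (use b b'(1) in \<open>auto simp: Dx_def\<close>)
  qed
  show "\<delta> (SApp (TVar x) b) \<le> (SUP b\<in>{b' \<in> Dx x. \<delta> b' \<le> \<delta> b}. \<delta> (SApp (TVar x) b))"
    using b by (intro SUP_upper) auto
qed

lemma g0_0: "g0 x 0 = 0"
proof -
  have "g0 x 0 \<le> 0" unfolding g0_def
  proof (rule SUP_least)
    fix b assume "b \<in> {b \<in> Dx x. \<delta> b \<le> 0}"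
    then have b: "b \<in> Dx x" "\<delta> b = 0" by auto
    show "\<delta> (SApp (TVar x) b) \<le> 0" using S2[OF Dx_D[OF b(1)] _ b(2)] b(1) by (simp add: Dx_def)
  qed
  then show ?thesis by simp
qed

lemma finDx: "finite (Dx x)" using finD Dx_D by (meson finite_subset subsetI)

lemma g0_fin: assumes L: "\<delta> (SLast (TVar x)) = \<infinity>" and b0: "Dx x \<noteq> {}" shows "g0 x (enat n) < \<infinity>"
  unfolding g0_def
proof (rule Sup_fin_lt)
  show "finite ((\<lambda>b. \<delta> (SApp (TVar x) b)) ` {b \<in> Dx x. \<delta> b \<le> enat n})" using finDx by simp
  obtain b0 where b0: "b0 \<in> Dx x" using b0 by auto
  note lx = Dx_last[OF b0]
  have c: "\<delta> (SApp (TVar x) (SLast (TVar x))) = \<infinity>" using S6[OF lx(2) _ L] lx(1) by (simp add: Dx_def)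
  show "\<forall>a\<in>(\<lambda>b. \<delta> (SApp (TVar x) b)) ` {b \<in> Dx x. \<delta> b \<le> enat n}. a < \<infinity>"
  proof
    fix a assume "a \<in> (\<lambda>b. \<delta> (SApp (TVar x) b)) ` {b \<in> Dx x. \<delta> b \<le> enat n}"
    then obtain b where b: "b \<in> Dx x" "\<delta> b \<le> enat n" "a = \<delta> (SApp (TVar x) b)" by auto
    have "\<not> \<delta> (SLast (TVar x)) \<le> \<delta> b" using L b(2) by (cases "\<delta> b") auto
    then have "\<delta> (SApp (TVar x) b) \<noteq> \<delta> (SApp (TVar x) (SLast (TVar x)))"
      using S5[OF Dx_D[OF b(1)] _ lx(2)] b(1) lx(1) by (simp add: Dx_def)
    then show "a < \<infinity>" using b(3) c by simp
  qed
qed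

lemma Mx_fin: "Mx x < \<infinity>"
  unfolding Mx_def by (rule Sup_fin_lt) (use finDx in auto)

lemma vw_W: "vw x \<in> W"
proof (cases "Dx x = {}")
  case True then show ?thesis by (simp add: vw_def W_id)
next
  case ne: False
  then obtain b0 where b0: "b0 \<in> Dx x" by auto
  note lx = Dx_last[OF b0]
  show ?thesis
  proof (cases "\<delta> (SLast (TVar x)) = \<infinity>")
    case L: True
    define m where "m = the_enat (Mx x)"
    let ?g = "\<lambda>p. case p of enat n \<Rightarrow> g0 x p + enat (n - m) | \<infinity> \<Rightarrow> \<infinity>"
    have e: "vw x = ?g" unfolding m_def by (rule vw_inf[OF ne L])
    have "?g \<in> W"
    proof (rule W_I)
      show "mono ?g"
      proof (rule monoI)
        fix p q :: enat assume pq: "p \<le> q"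
        show "?g p \<le> ?g q"
        proof (cases q)
          case (enat n')
          then obtain n where "p = enat n" "n \<le> n'" using pq by (cases p) auto
          then show ?thesis using enat g0_mono[OF pq, of x] by (auto intro!: add_mono)
        qed simp
      qed
      show "?g 0 = 0" using g0_0[of x] by (simp add: zero_enat_def)
      have "enat k \<le> (SUP n. ?g (enat n))" for k
      proof -
        have "enat k \<le> ?g (enat (k + m))" by simp
        also have "\<dots> \<le> (SUP n. ?g (enat n))" by (rule SUP_upper) simp
        finally show ?thesis .
      qed
      then have "(SUP n. ?g (enat n)) = \<infinity>" by (rule all_le_inf)
      then show "?g \<infinity> = (SUP n. ?g (enat n))" by simp
    qed
    then show ?thesis using e by simp
  next
    case L: False
    have e: "vw x = g0 x" by (rule vw_fin[OF ne L])
    have "g0 x \<in> W"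
    proof (rule W_I)
      show "mono (g0 x)" by (rule monoI) (rule g0_mono)
      show "g0 x 0 = 0" by (rule g0_0)
      show "g0 x \<infinity> = (SUP n. g0 x (enat n))"
      proof (rule antisym)
        show "(SUP n. g0 x (enat n)) \<le> g0 x \<infinity>" by (rule SUP_least) (rule g0_mono, simp)
        obtain l where l: "\<delta> (SLast (TVar x)) = enat l" using L fin_enat by blast
        show "g0 x \<infinity> \<le> (SUP n. g0 x (enat n))" unfolding g0_def[of x \<infinity>]
        proof (rule SUP_least)
          fix b assume "b \<in> {b \<in> Dx x. \<delta> b \<le> \<infinity>}"
          then have b: "b \<in> Dx x" by simp
          show "\<delta> (SApp (TVar x) b) \<le> (SUP n. g0 x (enat n))"
          proof (cases "\<delta> b")
            case (enat n)
            have "\<delta> (SApp (TVar x) b) = g0 x (enat n)" using g0_at[OF b] enat by simp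
            also have "\<dots> \<le> (SUP n. g0 x (enat n))" by (rule SUP_upper) simp
            finally show ?thesis .
          next
            case infinity
            then have "\<delta> (SApp (TVar x) b) = \<delta> (SApp (TVar x) (SLast (TVar x)))"
              using S5[OF Dx_D[OF b] _ lx(2)] b lx(1) l by (simp add: Dx_def)
            also have "\<dots> = g0 x (enat l)" using g0_at[OF lx(1)] l by simp
            also have "\<dots> \<le> (SUP n. g0 x (enat n))" by (rule SUP_upper) simp
            finally show ?thesis .
          qed
        qed
      qed
    qed
    then show ?thesis using e by simp
  qed
qed

lemma vw_V: assumes b: "SApp (TVar x) b \<in> D" shows "vw x (\<delta> b) = \<delta> (SApp (TVar x) b)"
proof -
  have bx: "b \<in> Dx x" using b by (simp add: Dx_def)
  then have ne: "Dx x \<noteq> {}" by auto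
  note lx = Dx_last[OF bx]
  show ?thesis
  proof (cases "\<delta> (SLast (TVar x)) = \<infinity>")
    case L: True
    show ?thesis
    proof (cases "\<delta> b")
      case (enat n)
      obtain m where m: "Mx x = enat m" using Mx_fin fin_enat by auto
      have "\<delta> b \<in> \<delta> ` {b \<in> Dx x. \<delta> b < \<infinity>}" using bx enat by (intro imageI) simp
      then have "\<delta> b \<le> Mx x" unfolding Mx_def by (rule Sup_upper)
      then have "n \<le> m" using enat m by simp
      then show ?thesis using enat m g0_at[OF bx] by (simp add: vw_inf[OF ne L] zero_enat_def[symmetric])
    next
      case infinity
      have "\<delta> (SApp (TVar x) b) = \<delta> (SApp (TVar x) (SLast (TVar x)))"
        using S5[OF Dx_D[OF bx] b lx(2)] lx(1) infinity by (simp add: Dx_def)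
      also have "\<dots> = \<infinity>" using S6[OF lx(2) _ L] lx(1) by (simp add: Dx_def)
      finally show ?thesis using infinity by (simp add: vw_inf[OF ne L])
    qed
  next
    case False
    then show ?thesis using g0_at[OF bx] by (simp add: vw_fin[OF ne False])
  qed
qed

lemma vw_A: assumes b: "SApp (TVar x) b \<in> D" and L: "\<delta> (SLast (TVar x)) = \<infinity>"
  shows "vw x (enat n) < vw x \<infinity>"
proof -
  have ne: "Dx x \<noteq> {}" using b by (auto simp: Dx_def)
  have "g0 x (enat n) < \<infinity>" by (rule g0_fin[OF L ne])
  then show ?thesis by (cases "g0 x (enat n)") (auto simp: vw_inf[OF ne L])
qed

end


lemma inf_le: "\<infinity> \<le> x \<Longrightarrow> x = (\<infinity>::enat)" by (cases x) auto

context cmp begin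

lemma val: "valuation vw" unfolding valuation_def using vw_W by blast
lemma E: "eval vw t \<in> W" by (rule eval_W[OF val])

lemma mArg: "SApp t a \<in> D \<Longrightarrow> a \<in> D" using closed leads.app_arg by blast
lemma mLastApp: "SApp t a \<in> D \<Longrightarrow> SApp t (SLast t) \<in> D" using closed leads.last by blast
lemma mLast: "SApp t a \<in> D \<Longrightarrow> SLast t \<in> D" using mArg mLastApp by blast
lemma mS: "SS a \<in> D \<Longrightarrow> a \<in> D" using closed leads.s_arg by blast

definition invt where "invt t \<longleftrightarrow> (\<forall>a. SApp t a \<in> D \<longrightarrow> eval vw t (\<delta> a) = \<delta> (SApp t a)) \<and>
  (\<forall>a n. SApp t a \<in> D \<longrightarrow> \<delta> (SLast t) = \<infinity> \<longrightarrow> eval vw t (enat n) < eval vw t \<infinity>)"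

lemma invV: "invt t \<Longrightarrow> SApp t a \<in> D \<Longrightarrow> eval vw t (\<delta> a) = \<delta> (SApp t a)"
  unfolding invt_def by blast
lemma invA: "invt t \<Longrightarrow> SApp t a \<in> D \<Longrightarrow> \<delta> (SLast t) = \<infinity> \<Longrightarrow> eval vw t (enat n) < eval vw t \<infinity>"
  unfolding invt_def by blast
lemma invI: "(\<And>a. SApp t a \<in> D \<Longrightarrow> eval vw t (\<delta> a) = \<delta> (SApp t a)) \<Longrightarrow>
  (\<And>a n. SApp t a \<in> D \<Longrightarrow> \<delta> (SLast t) = \<infinity> \<Longrightarrow> eval vw t (enat n) < eval vw t \<infinity>) \<Longrightarrow> invt t"
  unfolding invt_def by blast

lemma inv_var: "invt (TVar x)"
  by (rule invI) (auto intro: vw_V vw_A)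

lemma inv_id: "invt TId"
proof (rule invI)
  fix a assume h: "SApp TId a \<in> D"
  show "eval vw TId (\<delta> a) = \<delta> (SApp TId a)" using L1[OF mArg[OF h] h] by simp
qed simp

lemma inv_bot: "invt TBot"
proof (rule invI)
  fix a assume h: "SApp TBot a \<in> D"
  have ha: "a \<in> D" by (rule mArg[OF h])
  have ml: "SApp TBot (SLast TBot) \<in> D" by (rule mLastApp[OF h])
  have ml2: "SLast TBot \<in> D" by (rule mLast[OF h])
  have z: "\<delta> (SLast TBot) = 0" by (rule L2[OF h ml2])
  have "\<delta> (SApp TBot a) = \<delta> (SApp TBot (SLast TBot))" using S5[OF ha h ml2 ml] z by simp
  also have "\<dots> = 0" by (rule S2[OF ml2 ml z])
  finally show "eval vw TBot (\<delta> a) = \<delta> (SApp TBot a)" by (simp add: botW_def)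
next
  fix a n assume h: "SApp TBot a \<in> D" "\<delta> (SLast TBot) = \<infinity>"
  then show "eval vw TBot (enat n) < eval vw TBot \<infinity>" using L2[OF h(1) mLast[OF h(1)]] by simp
qed

lemma inv_comp: assumes IHt: "invt t" and IHu: "invt u" shows "invt (TComp t u)"
proof (rule invI)
  fix a assume h: "SApp (TComp t u) a \<in> D"
  have h1: "SApp t (SApp u a) \<in> D" by (rule closed[OF h leads.comp])
  have h2: "SApp u a \<in> D" by (rule mArg[OF h1])
  have "eval vw (TComp t u) (\<delta> a) = eval vw t (eval vw u (\<delta> a))" by simp
  also have "\<dots> = eval vw t (\<delta> (SApp u a))" using invV[OF IHu h2] by simp
  also have "\<dots> = \<delta> (SApp t (SApp u a))" by (rule invV[OF IHt h1])
  also have "\<dots> = \<delta> (SApp (TComp t u) a)" using L3[OF h h1] by simp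
  finally show "eval vw (TComp t u) (\<delta> a) = \<delta> (SApp (TComp t u) a)" .
next
  fix a n assume h: "SApp (TComp t u) a \<in> D" and Li: "\<delta> (SLast (TComp t u)) = \<infinity>"
  have m1: "SApp (TComp t u) (SLast (TComp t u)) \<in> D" by (rule mLastApp[OF h])
  have m2: "SLast (TComp t u) \<in> D" by (rule mLast[OF h])
  have m3: "SApp t (SApp u (SLast (TComp t u))) \<in> D" by (rule closed[OF m1 leads.comp])
  have m5: "SLast t \<in> D" by (rule mLast[OF m3])
  have m6: "SApp u (SLast (TComp t u)) \<in> D" by (rule mArg[OF m3])
  have m8: "SLast u \<in> D" by (rule mLast[OF m6])
  have l4: "\<delta> (SLast t) = \<infinity> \<and> \<delta> (SLast u) = \<infinity>" by (rule L4[OF m1 m2 m5 m8 Li])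
  have At: "\<And>k. eval vw t (enat k) < eval vw t \<infinity>" using invA[OF IHt m3] l4 by blast
  have Au: "\<And>k. eval vw u (enat k) < eval vw u \<infinity>" using invA[OF IHu m6] l4 by blast
  have gi: "eval vw u \<infinity> = \<infinity>" using A_inf[OF E] Au by blast
  obtain k where k: "eval vw u (enat n) = enat k" using Au[of n] gi fin_enat by auto
  show "eval vw (TComp t u) (enat n) < eval vw (TComp t u) \<infinity>" using At[of k] k gi by simp
qed

lemma inv_o: assumes IH: "invt t" shows "invt (TO t)"
proof (rule invI)
  let ?f = "eval vw t"
  have fW: "?f \<in> W" by (rule E)
  have fin: "oconj ?f (\<delta> b) = \<delta> (SApp (TO t) b)" if h: "SApp (TO t) b \<in> D" and b: "\<delta> b < \<infinity>" for b
  proof -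
    have hb: "b \<in> D" by (rule mArg[OF h])
    have ht: "SApp t b \<in> D" by (rule closed[OF h leads.o_un])
    have o2: "\<delta> (SApp (TO t) b) = \<infinity> \<longleftrightarrow> \<delta> (SApp t b) = \<infinity>" by (rule O2[OF hb h ht b])
    have o1: "\<delta> (SApp (TO t) b) \<in> {0, \<infinity>}" by (rule O1[OF h])
    have v: "?f (\<delta> b) = \<delta> (SApp t b)" by (rule invV[OF IH ht])
    show ?thesis using oc_fin[OF fW, of "\<delta> b"] b o1 o2 v by auto
  qed
  fix a assume h: "SApp (TO t) a \<in> D"
  show "eval vw (TO t) (\<delta> a) = \<delta> (SApp (TO t) a)"
  proof (cases "\<delta> a < \<infinity>")
    case True then show ?thesis using fin h by simp
  next
    case False
    then have ai: "\<delta> a = \<infinity>" by simp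
    have ha: "a \<in> D" by (rule mArg[OF h])
    have ml: "SApp (TO t) (SLast (TO t)) \<in> D" by (rule mLastApp[OF h])
    have ml2: "SLast (TO t) \<in> D" by (rule mLast[OF h])
    have lf: "\<delta> (SLast (TO t)) < \<infinity>" by (rule O3[OF ml2])
    have s5: "\<delta> (SApp (TO t) a) = \<delta> (SApp (TO t) (SLast (TO t)))" using S5[OF ha h ml2 ml] ai by simp
    have vl: "oconj ?f (\<delta> (SLast (TO t))) = \<delta> (SApp (TO t) (SLast (TO t)))" by (rule fin[OF ml lf])
    have ht: "SApp t a \<in> D" by (rule closed[OF h leads.o_un])
    have mt: "SApp t (SLast t) \<in> D" by (rule mLastApp[OF ht])
    have mt2: "SLast t \<in> D" by (rule mLast[OF ht])
    show ?thesis
    proof (cases "oconj ?f (\<delta> (SLast (TO t))) = \<infinity>")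
      case True
      have "oconj ?f (\<delta> (SLast (TO t))) \<le> oconj ?f \<infinity>" by (rule tw_mono[OF oc_W]) simp
      then have "oconj ?f \<infinity> = \<infinity>" using True by (simp add: inf_le)
      then show ?thesis using s5 vl True ai by simp
    next
      case False
      have "oconj ?f (\<delta> (SLast (TO t))) = (if ?f (\<delta> (SLast (TO t))) = \<infinity> then \<infinity> else 0)"
        using oc_fin[OF fW, of "\<delta> (SLast (TO t))"] lf by simp
      then have z: "oconj ?f (\<delta> (SLast (TO t))) = 0" using False by (simp split: if_splits)
      then have tl: "\<delta> (SApp (TO t) (SLast (TO t))) < \<infinity>" using vl by simp
      have ffin: "?f (enat n) \<noteq> \<infinity>" for n
      proof (cases "\<delta> (SLast t) = \<infinity>")
        case True
        then have "?f (enat n) < ?f \<infinity>" using invA[OF IH ht] by blast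
        then show ?thesis by (cases "?f (enat n)") auto
      next
        case False
        then have "\<delta> (SApp t (SLast t)) < \<infinity>" using O4[OF mt2 mt ml tl] by simp
        moreover have "\<delta> (SApp t a) = \<delta> (SApp t (SLast t))" using S5[OF ha ht mt2 mt] ai by simp
        moreover have "?f (\<delta> a) = \<delta> (SApp t a)" by (rule invV[OF IH ht])
        ultimately have "?f \<infinity> < \<infinity>" using ai by simp
        moreover have "?f (enat n) \<le> ?f \<infinity>" by (rule tw_mono[OF fW]) simp
        ultimately show ?thesis by (cases "?f (enat n)"; cases "?f \<infinity>") auto
      qed
      have "oconj ?f \<infinity> = 0" using oc_inf[OF fW] ffin by simp
      then show ?thesis using s5 vl z ai by simp
    qed
  qed
next
  fix a n assume h: "SApp (TO t) a \<in> D" "\<delta> (SLast (TO t)) = \<infinity>"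
  then show "eval vw (TO t) (enat n) < eval vw (TO t) \<infinity>" using O3[OF mLast[OF h(1)]] by simp
qed

end


context cmp begin

lemma mP: "SP a \<in> D \<Longrightarrow> a \<in> D" using closed leads.p_arg by blast

lemma inv_r: assumes IH: "invt t" shows "invt (TR t)"
proof (rule invI)
  let ?f = "eval vw t"
  let ?R = "rconj ?f"
  have fW: "?f \<in> W" by (rule E)
  have fin: "?R (\<delta> b) = \<delta> (SApp (TR t) b)" if h: "SApp (TR t) b \<in> D" and b: "\<delta> b < \<infinity>" for b
  proof -
    have hb: "b \<in> D" by (rule mArg[OF h])
    have h1: "SApp t (SApp (TR t) b) \<in> D" by (rule closed[OF h leads.r1])
    have h2: "SApp t (SS (SApp (TR t) b)) \<in> D" by (rule closed[OF h leads.r2])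
    have h3: "SS (SApp (TR t) b) \<in> D" by (rule mArg[OF h2])
    show ?thesis
    proof (cases "\<delta> b = 0")
      case True
      then show ?thesis using S2[OF hb h True] tw_0[OF rc_W] by simp
    next
      case b0: False
      then have pos: "0 < \<delta> b" by (simp add: zero_less_iff_neq_zero)
      have r1: "\<delta> (SApp t (SApp (TR t) b)) \<le> \<delta> b" by (rule R1[OF hb h1])
      have v1: "?f (\<delta> (SApp (TR t) b)) = \<delta> (SApp t (SApp (TR t) b))" by (rule invV[OF IH h1])
      show ?thesis
      proof (cases "\<delta> (SApp (TR t) b) < \<infinity>")
        case q: True
        have r2: "\<delta> b < \<delta> (SApp t (SS (SApp (TR t) b)))" by (rule R2[OF hb h h2 pos b q])
        have v2: "?f (\<delta> (SS (SApp (TR t) b))) = \<delta> (SApp t (SS (SApp (TR t) b)))" by (rule invV[OF IH h2])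
        have s4: "\<delta> (SS (SApp (TR t) b)) = \<delta> (SApp (TR t) b) + 1" using S4[OF h h3] q by (simp add: oplus1_def)
        show ?thesis
          by (rule rc_b[OF fW b0]) (use b q r1 v1 r2 v2 s4 in auto)
      next
        case False
        then have "\<delta> (SApp (TR t) b) = \<infinity>" by simp
        then show ?thesis using rc_c[OF fW b0] b r1 v1 by simp
      qed
    qed
  qed
  fix a assume h: "SApp (TR t) a \<in> D"
  have ml: "SApp (TR t) (SLast (TR t)) \<in> D" by (rule mLastApp[OF h])
  have ml2: "SLast (TR t) \<in> D" by (rule mLast[OF h])
  have mr1: "SApp t (SApp (TR t) (SLast (TR t))) \<in> D" by (rule closed[OF ml leads.r1])
  have mr2: "SApp t (SS (SApp (TR t) (SLast (TR t)))) \<in> D" by (rule closed[OF ml leads.r2])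
  have mr3: "SS (SApp (TR t) (SLast (TR t))) \<in> D" by (rule mArg[OF mr2])
  have mt: "SApp t (SLast t) \<in> D" by (rule mLastApp[OF mr1])
  have mt2: "SLast t \<in> D" by (rule mLast[OF mr1])
  let ?V = "\<delta> (SApp (TR t) (SLast (TR t)))"
  let ?L = "\<delta> (SLast (TR t))"
  have r4v: "?f (?V + 1) = \<infinity>" if Vf: "?V < \<infinity>"
  proof -
    have "\<delta> (SApp t (SS (SApp (TR t) (SLast (TR t))))) = \<infinity>" by (rule R4[OF ml mr2 Vf])
    moreover have "?f (\<delta> (SS (SApp (TR t) (SLast (TR t))))) = \<delta> (SApp t (SS (SApp (TR t) (SLast (TR t)))))"
      by (rule invV[OF IH mr2])
    moreover have "\<delta> (SS (SApp (TR t) (SLast (TR t)))) = ?V + 1" using S4[OF ml mr3] Vf by (simp add: oplus1_def)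
    ultimately show ?thesis by simp
  qed
  show "eval vw (TR t) (\<delta> a) = \<delta> (SApp (TR t) a)"
  proof (cases "\<delta> a < \<infinity>")
    case True then show ?thesis using fin h by simp
  next
    case False
    then have ai: "\<delta> a = \<infinity>" by simp
    have ha: "a \<in> D" by (rule mArg[OF h])
    have s5: "\<delta> (SApp (TR t) a) = ?V" using S5[OF ha h ml2 ml] ai by simp
    have goal: "?R \<infinity> = ?V"
    proof (cases "?L < \<infinity>")
      case Lf: True
      have vl: "?R ?L = ?V" by (rule fin[OF ml Lf])
      have mono: "?R ?L \<le> ?R \<infinity>" by (rule rc_mono) simp
      show ?thesis
      proof (cases "?V < \<infinity>")
        case True
        have "?R \<infinity> \<le> ?V" using rc_inf_le[OF fW _ r4v[OF True]] True by simp
        then show ?thesis using mono vl by simp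
      next
        case False
        then show ?thesis using mono vl by (simp add: inf_le)
      qed
    next
      case False
      then have Li: "?L = \<infinity>" by simp
      have lt: "\<delta> (SLast t) = \<infinity>" by (rule R3[OF ml ml2 mt2 Li])
      have At: "\<forall>k. ?f (enat k) < ?f \<infinity>" using invA[OF IH mr1 lt] by blast
      show ?thesis
      proof (cases "?V = \<infinity>")
        case True then show ?thesis using rc_A(1)[OF fW At] by simp
      next
        case Vf: False
        have "\<not> \<delta> (SLast t) \<le> ?V" using lt Vf by (simp add: inf_le)
        then have "\<delta> (SApp t (SApp (TR t) (SLast (TR t)))) \<noteq> \<delta> (SApp t (SLast t))"
          using S5[OF ml mr1 mt2 mt] by simp
        moreover have "\<delta> (SApp t (SLast t)) = \<infinity>" by (rule S6[OF mt2 mt lt])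
        moreover have "?f ?V = \<delta> (SApp t (SApp (TR t) (SLast (TR t))))" by (rule invV[OF IH mr1])
        ultimately have fV: "?f ?V \<noteq> \<infinity>" by simp
        have "?R \<infinity> \<le> ?V" using rc_inf_le[OF fW Vf r4v] Vf by simp
        moreover have "?V \<le> ?R \<infinity>" by (rule rc_inf_ge[OF fW fV])
        ultimately show ?thesis by simp
      qed
    qed
    show ?thesis using goal s5 ai by simp
  qed
next
  fix a n assume h: "SApp (TR t) a \<in> D" and Li: "\<delta> (SLast (TR t)) = \<infinity>"
  have ml: "SApp (TR t) (SLast (TR t)) \<in> D" by (rule mLastApp[OF h])
  have ml2: "SLast (TR t) \<in> D" by (rule mLast[OF h])
  have mr1: "SApp t (SApp (TR t) (SLast (TR t))) \<in> D" by (rule closed[OF ml leads.r1])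
  have mt2: "SLast t \<in> D" by (rule mLast[OF mr1])
  have lt: "\<delta> (SLast t) = \<infinity>" by (rule R3[OF ml ml2 mt2 Li])
  have At: "\<forall>k. eval vw t (enat k) < eval vw t \<infinity>" using invA[OF IH mr1 lt] by blast
  show "eval vw (TR t) (enat n) < eval vw (TR t) \<infinity>" using rc_A(2)[OF E At] by simp
qed

lemma inv_l: assumes IH: "invt t" shows "invt (TL t)"
proof (rule invI)
  let ?f = "eval vw t"
  let ?Lf = "lconj ?f"
  have fW: "?f \<in> W" by (rule E)
  have fin: "?Lf (\<delta> b) = \<delta> (SApp (TL t) b)" if h: "SApp (TL t) b \<in> D" and b: "\<delta> b < \<infinity>" for b
  proof -
    have hb: "b \<in> D" by (rule mArg[OF h])
    have h1: "SApp t (SApp (TL t) b) \<in> D" by (rule closed[OF h leads.l1])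
    have h2: "SApp t (SP (SApp (TL t) b)) \<in> D" by (rule closed[OF h leads.l2])
    have h3: "SP (SApp (TL t) b) \<in> D" by (rule mArg[OF h2])
    show ?thesis
    proof (cases "\<delta> b = 0")
      case True
      then show ?thesis using S2[OF hb h True] tw_0[OF lc_W] by simp
    next
      case b0: False
      then have pos: "0 < \<delta> b" by (simp add: zero_less_iff_neq_zero)
      have v1: "?f (\<delta> (SApp (TL t) b)) = \<delta> (SApp t (SApp (TL t) b))" by (rule invV[OF IH h1])
      show ?thesis
      proof (cases "\<delta> (SApp (TL t) b) < \<infinity>")
        case q: True
        then obtain k where k: "\<delta> (SApp (TL t) b) = enat k" using fin_enat by auto
        have la1: "\<delta> b \<le> \<delta> (SApp t (SApp (TL t) b))" by (rule La1[OF hb h1 q])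
        have la2: "\<delta> (SApp t (SP (SApp (TL t) b))) < \<delta> b" by (rule La2[OF hb h h2 pos b q])
        have v2: "?f (\<delta> (SP (SApp (TL t) b))) = \<delta> (SApp t (SP (SApp (TL t) b)))" by (rule invV[OF IH h2])
        have s3: "\<delta> (SP (SApp (TL t) b)) = ominus1 (enat k)" using S3[OF h h3] k by simp
        have fk: "\<delta> b \<le> ?f (enat k)" using la1 v1 k by simp
        have k0: "k > 0"
        proof (rule ccontr)
          assume "\<not> k > 0"
          then have "enat k = 0" by (simp add: zero_enat_def)
          then show False using fk pos fW by simp
        qed
        have om: "ominus1 (enat k) = enat (k - 1)" using k0 by (simp add: ominus1_def zero_enat_def one_enat_def)
        have fk1: "?f (enat (k - 1)) < \<delta> b" using la2 v2 s3 om by simp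
        show ?thesis using lc_b[OF fW b0 _ fk fk1 k0] b k by simp
      next
        case False
        then have qi: "\<delta> (SApp (TL t) b) = \<infinity>" by simp
        have "\<delta> (SApp t (SApp (TL t) b)) < \<delta> b" by (rule La3[OF hb h h1 b qi])
        then show ?thesis using lc_c[OF fW b0] b v1 qi by simp
      qed
    qed
  qed
  fix a assume h: "SApp (TL t) a \<in> D"
  have ml: "SApp (TL t) (SLast (TL t)) \<in> D" by (rule mLastApp[OF h])
  have ml2: "SLast (TL t) \<in> D" by (rule mLast[OF h])
  have ml1: "SApp t (SApp (TL t) (SLast (TL t))) \<in> D" by (rule closed[OF ml leads.l1])
  have mt: "SApp t (SLast t) \<in> D" by (rule mLastApp[OF ml1])
  have mt2: "SLast t \<in> D" by (rule mLast[OF ml1])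
  let ?V = "\<delta> (SApp (TL t) (SLast (TL t)))"
  let ?L = "\<delta> (SLast (TL t))"
  have la5v: "?f ?V = \<infinity>" if Vf: "?V < \<infinity>"
    using La5[OF ml ml1 Vf] invV[OF IH ml1] by simp
  show "eval vw (TL t) (\<delta> a) = \<delta> (SApp (TL t) a)"
  proof (cases "\<delta> a < \<infinity>")
    case True then show ?thesis using fin h by simp
  next
    case False
    then have ai: "\<delta> a = \<infinity>" by simp
    have ha: "a \<in> D" by (rule mArg[OF h])
    have s5: "\<delta> (SApp (TL t) a) = ?V" using S5[OF ha h ml2 ml] ai by simp
    have goal: "?Lf \<infinity> = ?V"
    proof (cases "?L < \<infinity>")
      case Lf: True
      have vl: "?Lf ?L = ?V" by (rule fin[OF ml Lf])
      have mono: "?Lf ?L \<le> ?Lf \<infinity>" by (rule lc_mono) simp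
      show ?thesis
      proof (cases "?V < \<infinity>")
        case True
        have "?Lf \<infinity> \<le> ?V" using lc_prop[of ?f ?V] la5v[OF True] by simp
        then show ?thesis using mono vl by simp
      next
        case False
        then show ?thesis using mono vl by (simp add: inf_le)
      qed
    next
      case False
      then have Li: "?L = \<infinity>" by simp
      have lt: "\<delta> (SLast t) = \<infinity>" by (rule La4[OF ml ml2 mt2 Li])
      have At: "\<forall>k. ?f (enat k) < ?f \<infinity>" using invA[OF IH ml1 lt] by blast
      have li: "?Lf \<infinity> = \<infinity>" by (rule lc_A(1)[OF fW At])
      have "?V = \<infinity>"
      proof (rule ccontr)
        assume "?V \<noteq> \<infinity>"
        then obtain k where k: "?V = enat k" using fin_enat by auto
        then have "?f (enat k) = \<infinity>" using la5v by simp
        moreover have "?f \<infinity> = \<infinity>" by (rule A_inf[OF fW At])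
        ultimately show False using At by (metis order_less_irrefl)
      qed
      then show ?thesis using li by simp
    qed
    show ?thesis using goal s5 ai by simp
  qed
next
  fix a n assume h: "SApp (TL t) a \<in> D" and Li: "\<delta> (SLast (TL t)) = \<infinity>"
  have ml: "SApp (TL t) (SLast (TL t)) \<in> D" by (rule mLastApp[OF h])
  have ml2: "SLast (TL t) \<in> D" by (rule mLast[OF h])
  have ml1: "SApp t (SApp (TL t) (SLast (TL t))) \<in> D" by (rule closed[OF ml leads.l1])
  have mt2: "SLast t \<in> D" by (rule mLast[OF ml1])
  have lt: "\<delta> (SLast t) = \<infinity>" by (rule La4[OF ml ml2 mt2 Li])
  have At: "\<forall>k. eval vw t (enat k) < eval vw t \<infinity>" using invA[OF IH ml1 lt] by blast
  show "eval vw (TL t) (enat n) < eval vw (TL t) \<infinity>" using lc_A(2)[OF E At] by simp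
qed

lemma inv_all: "invt t"
  by (induction t) (auto intro: inv_var inv_comp inv_o inv_l inv_r inv_id inv_bot)

lemma completeness: "SApp t a \<in> D \<Longrightarrow> eval vw t (\<delta> a) = \<delta> (SApp t a)"
  by (rule invV[OF inv_all])

end


theorem theorem3p19:
  fixes ts :: "'v bterm list" and \<kappa> :: 'k
  shows "(\<not> (\<forall>\<theta>. valuation \<theta> \<longrightarrow> (id :: enat \<Rightarrow> enat) \<le> (SUP t\<in>set ts. eval \<theta> t)))
     \<longleftrightarrow> (\<exists>\<delta>. diagram (saturation ((\<lambda>t. SApp t (SVar \<kappa>)) ` set ts)) \<delta> \<and>
              (\<forall>t\<in>set ts. \<delta> (SApp t (SVar \<kappa>)) < \<delta> (SVar \<kappa>)))"
proof
  assume "\<not> (\<forall>\<theta>. valuation \<theta> \<longrightarrow> (id :: enat \<Rightarrow> enat) \<le> (SUP t\<in>set ts. eval \<theta> t))"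
  then obtain \<theta> where th: "valuation \<theta>" and nle: "\<not> (id :: enat \<Rightarrow> enat) \<le> (SUP t\<in>set ts. eval \<theta> t)"
    by blast
  have "\<exists>p. \<not> id p \<le> (SUP t\<in>set ts. eval \<theta> t) p" using nle unfolding le_fun_def by blast
  then obtain p where "\<not> id p \<le> (SUP t\<in>set ts. eval \<theta> t) p" by blast
  then have np: "\<not> p \<le> (SUP t\<in>set ts. eval \<theta> t p)" unfolding SUP_apply id_apply .
  have lt: "eval \<theta> t p < p" if "t \<in> set ts" for t
  proof -
    have "eval \<theta> t p \<le> (SUP t\<in>set ts. eval \<theta> t p)" using that by (rule SUP_upper)
    then show ?thesis using np by (simp add: not_le le_less_trans)
  qed
  show "\<exists>\<delta>. diagram (saturation ((\<lambda>t. SApp t (SVar \<kappa>)) ` set ts)) \<delta> \<and>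
              (\<forall>t\<in>set ts. \<delta> (SApp t (SVar \<kappa>)) < \<delta> (SVar \<kappa>))"
    using soundness[OF th] lt by (intro exI[of _ "sem \<theta> p"]) auto
next
  let ?D = "saturation ((\<lambda>t. SApp t (SVar \<kappa>)) ` set ts)"
  assume "\<exists>\<delta>. diagram ?D \<delta> \<and> (\<forall>t\<in>set ts. \<delta> (SApp t (SVar \<kappa>)) < \<delta> (SVar \<kappa>))"
  then obtain \<delta> where dg: "diagram ?D \<delta>" and lt: "\<forall>t\<in>set ts. \<delta> (SApp t (SVar \<kappa>)) < \<delta> (SVar \<kappa>)"
    by blast
  have cl: "b \<in> ?D" if "a \<in> ?D" "leads a b" for a b
    using that unfolding saturation_def by (auto intro: rtranclp.rtrancl_into_rtrancl)
  interpret C: cmp ?D \<delta>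
    by unfold_locales (rule dg, rule cl, assumption+, rule sat_finite)
  have base: "SApp t (SVar \<kappa>) \<in> ?D" if "t \<in> set ts" for t
    using that unfolding saturation_def by auto
  show "\<not> (\<forall>\<theta>. valuation \<theta> \<longrightarrow> (id :: enat \<Rightarrow> enat) \<le> (SUP t\<in>set ts. eval \<theta> t))"
  proof
    assume "\<forall>\<theta>. valuation \<theta> \<longrightarrow> (id :: enat \<Rightarrow> enat) \<le> (SUP t\<in>set ts. eval \<theta> t)"
    then have le: "(id :: enat \<Rightarrow> enat) \<le> (SUP t\<in>set ts. eval C.vw t)" using C.val by blast
    show False
    proof (cases "ts = []")
      case True
      then have "\<forall>x::enat. x \<le> bot" using le by (simp add: le_fun_def)
      then have "(1::enat) \<le> 0" unfolding bot_enat_def by blast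
      then show False by simp
    next
      case False
      let ?p = "\<delta> (SVar \<kappa>)"
      have "id ?p \<le> (SUP t\<in>set ts. eval C.vw t) ?p" using le unfolding le_fun_def by blast
      then have "?p \<le> (SUP t\<in>set ts. eval C.vw t ?p)" unfolding SUP_apply id_apply .
      moreover have "(SUP t\<in>set ts. eval C.vw t ?p) < ?p"
      proof -
        have "\<forall>x\<in>(\<lambda>t. eval C.vw t ?p) ` set ts. x < ?p"
          using lt C.completeness[OF base] by auto
        then show ?thesis using False by (subst finite_Sup_less_iff) auto
      qed
      ultimately show False by simp
    qed
  qed
qed

end
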